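(* For real $p$, the inequalities $$\left( \frac{\sinh x}{x}\right) ^{2p}+\left( \frac{\tanh x}{x}\right)^{p}>\left( \frac{x}{\sinh x}\right) ^{2p}+\left( \frac{x}{\tanh x}\right)^{p}>2$$ hold for all $x\in(0,\infty)$ if and only if $p\geq 3/5$. *)

theory Defs
  imports "HOL-Analysis.Analysis"
begin

end

theory Submission
  imports Defs "HOL-Real_Asymp.Real_Asymp"
begin

definition T4a :: "real \<Rightarrow> real" where
  "T4a e = 1 - 2/5*e + 7/25*e^2 - 28/125*e^3 + 119/625*e^4"
definition T3b :: "real \<Rightarrow> real" where
  "T3b e = 1 + 3/5*e - 3/25*e^2 + 7/125*e^3"

lemma pow5_root:
  fixes R :: real assumes "0 \<le> R" shows "(R ^ 5) powr (1/5) = R"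
proof (cases "R = 0")
  case True then show ?thesis by simp
next
  case False
  then have R0: "0 < R" using assms by simp
  have "R ^ 5 = R powr 5" using R0 by (simp add: powr_numeral)
  then have "(R ^ 5) powr (1/5) = R powr (5 * (1/5))" by (simp add: powr_powr)
  also have "\<dots> = R" using R0 by simp
  finally show ?thesis .
qed

lemma pow3_root:
  fixes z :: real assumes "0 \<le> z" shows "(z ^ 3) powr (1/5) = z powr (3/5)"
proof (cases "z = 0")
  case True then show ?thesis by simp
next
  case False
  then have z0: "0 < z" using assms by simp
  have "z ^ 3 = z powr 3" using z0 by (simp add: powr_numeral)
  then have "(z ^ 3) powr (1/5) = z powr (3 * (1/5))" by (simp add: powr_powr)
  also have "\<dots> = z powr (3/5)" by simp
  finally show ?thesis .
qed

lemma root5_le: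
  fixes R z :: real assumes "0 \<le> R" "0 \<le> z" "R ^ 5 \<le> z ^ 3"
  shows "R \<le> z powr (3/5)"
proof -
  have "R = (R ^ 5) powr (1/5)" using pow5_root assms by simp
  also have "\<dots> \<le> (z ^ 3) powr (1/5)" by (rule powr_mono2) (use assms in auto)
  also have "\<dots> = z powr (3/5)" using pow3_root assms by simp
  finally show ?thesis .
qed

lemma root5_less:
  fixes R z :: real assumes "0 \<le> R" "0 \<le> z" "R ^ 5 < z ^ 3"
  shows "R < z powr (3/5)"
proof -
  have "R = (R ^ 5) powr (1/5)" using pow5_root assms by simp
  also have "\<dots> < (z ^ 3) powr (1/5)" by (rule powr_less_mono2) (use assms in auto)
  also have "\<dots> = z powr (3/5)" using pow3_root assms by simp
  finally show ?thesis .
qed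

lemma root5_ge:
  fixes U z :: real assumes "0 \<le> U" "0 \<le> z" "z ^ 3 \<le> U ^ 5"
  shows "z powr (3/5) \<le> U"
proof -
  have "z powr (3/5) = (z ^ 3) powr (1/5)" using pow3_root assms by simp
  also have "\<dots> \<le> (U ^ 5) powr (1/5)" by (rule powr_mono2) (use assms in auto)
  also have "\<dots> = U" using pow5_root assms by simp
  finally show ?thesis .
qed

lemma nonneg_from_deriv:
  fixes f f' :: "real \<Rightarrow> real"
  assumes f0: "f 0 = 0" and d: "\<And>x. 0 \<le> x \<Longrightarrow> (f has_real_derivative f' x) (at x)"
    and p: "\<And>x. 0 \<le> x \<Longrightarrow> 0 \<le> f' x" and x: "0 \<le> x"
  shows "0 \<le> f x"
proof (cases "x = 0")
  case True then show ?thesis using f0 by simp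
next
  case False
  then have "0 < x" using x by simp
  have c: "continuous_on {0..x} f"
    using d by (intro continuous_at_imp_continuous_on ballI) (auto intro: DERIV_isCont)
  have "f 0 \<le> f x"
  proof (rule DERIV_nonneg_imp_increasing_open[OF x _ c])
    fix t :: real assume "0 < t" "t < x"
    then show "\<exists>y. (f has_real_derivative y) (at t) \<and> 0 \<le> y"
      using d[of t] p[of t] by (intro exI[of _ "f' t"]) auto
  qed
  then show ?thesis using f0 by simp
qed

lemma cs_step:
  fixes A B A' B' :: "real \<Rightarrow> real"
  assumes "A 0 = 0"
    "\<And>x. (A has_real_derivative A' x) (at x)" "\<And>x. (B has_real_derivative B' x) (at x)"
    "\<And>x. 0 \<le> x \<Longrightarrow> 0 \<le> (A' x + B x) * cosh x + (B' x + A x) * sinh x"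
    "0 \<le> x"
  shows "0 \<le> A x * cosh x + B x * sinh x"
  apply (rule nonneg_from_deriv[where f="\<lambda>x. A x * cosh x + B x * sinh x"
        and f'="\<lambda>x. (A' x + B x) * cosh x + (B' x + A x) * sinh x"])
  using assms by (auto intro!: derivative_eq_intros simp: algebra_simps)

lemma cs_lev9:
  fixes x :: real assumes "0 \<le> x"
  shows "0 \<le> ((975) * x ^ 2 + (30) * x ^ 4) * cosh x + ((945) * x ^ 1 + (285) * x ^ 3 + (1) * x ^ 5) * sinh x"
  using assms by (intro add_nonneg_nonneg mult_nonneg_nonneg zero_le_power; simp)

lemma cs_lev8:
  fixes x :: real assumes "0 \<le> x"
  shows "0 \<le> ((105) * x ^ 1 + (185) * x ^ 3 + (1) * x ^ 5) * cosh x + ((-105) + (420) * x ^ 2 + (25) * x ^ 4) * sinh x"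
proof (rule cs_step[where A="\<lambda>x. (105) * x ^ 1 + (185) * x ^ 3 + (1) * x ^ 5" and B="\<lambda>x. (-105) + (420) * x ^ 2 + (25) * x ^ 4"
     and A'="\<lambda>x. (105) + (555) * x ^ 2 + (5) * x ^ 4" and B'="\<lambda>x. (840) * x ^ 1 + (100) * x ^ 3", OF _ _ _ _ assms])
  fix x :: real
  show "((\<lambda>x. (105) * x ^ 1 + (185) * x ^ 3 + (1) * x ^ 5) has_real_derivative ((105) + (555) * x ^ 2 + (5) * x ^ 4)) (at x)"
    by (rule derivative_eq_intros refl | simp add: algebra_simps)+
  show "((\<lambda>x. (-105) + (420) * x ^ 2 + (25) * x ^ 4) has_real_derivative ((840) * x ^ 1 + (100) * x ^ 3)) (at x)"
    by (rule derivative_eq_intros refl | simp add: algebra_simps)+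
  assume x0: "0 \<le> x"
  have "(((105) + (555) * x ^ 2 + (5) * x ^ 4) + ((-105) + (420) * x ^ 2 + (25) * x ^ 4)) * cosh x + (((840) * x ^ 1 + (100) * x ^ 3) + ((105) * x ^ 1 + (185) * x ^ 3 + (1) * x ^ 5)) * sinh x
      = ((975) * x ^ 2 + (30) * x ^ 4) * cosh x + ((945) * x ^ 1 + (285) * x ^ 3 + (1) * x ^ 5) * sinh x" (is "?l = _") by algebra
  then show "0 \<le> (((105) + (555) * x ^ 2 + (5) * x ^ 4) + ((-105) + (420) * x ^ 2 + (25) * x ^ 4)) * cosh x + (((840) * x ^ 1 + (100) * x ^ 3) + ((105) * x ^ 1 + (185) * x ^ 3 + (1) * x ^ 5)) * sinh x"
    by (subst \<open>?l = _\<close>) (rule cs_lev9[OF x0])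
qed simp

lemma cs_lev7:
  fixes x :: real assumes "0 \<le> x"
  shows "0 \<le> ((105) * x ^ 2 + (20) * x ^ 4) * cosh x + ((-105) * x ^ 1 + (105) * x ^ 3 + (1) * x ^ 5) * sinh x"
proof (rule cs_step[where A="\<lambda>x. (105) * x ^ 2 + (20) * x ^ 4" and B="\<lambda>x. (-105) * x ^ 1 + (105) * x ^ 3 + (1) * x ^ 5"
     and A'="\<lambda>x. (210) * x ^ 1 + (80) * x ^ 3" and B'="\<lambda>x. (-105) + (315) * x ^ 2 + (5) * x ^ 4", OF _ _ _ _ assms])
  fix x :: real
  show "((\<lambda>x. (105) * x ^ 2 + (20) * x ^ 4) has_real_derivative ((210) * x ^ 1 + (80) * x ^ 3)) (at x)"
    by (rule derivative_eq_intros refl | simp add: algebra_simps)+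
  show "((\<lambda>x. (-105) * x ^ 1 + (105) * x ^ 3 + (1) * x ^ 5) has_real_derivative ((-105) + (315) * x ^ 2 + (5) * x ^ 4)) (at x)"
    by (rule derivative_eq_intros refl | simp add: algebra_simps)+
  assume x0: "0 \<le> x"
  have "(((210) * x ^ 1 + (80) * x ^ 3) + ((-105) * x ^ 1 + (105) * x ^ 3 + (1) * x ^ 5)) * cosh x + (((-105) + (315) * x ^ 2 + (5) * x ^ 4) + ((105) * x ^ 2 + (20) * x ^ 4)) * sinh x
      = ((105) * x ^ 1 + (185) * x ^ 3 + (1) * x ^ 5) * cosh x + ((-105) + (420) * x ^ 2 + (25) * x ^ 4) * sinh x" (is "?l = _") by algebra
  then show "0 \<le> (((210) * x ^ 1 + (80) * x ^ 3) + ((-105) * x ^ 1 + (105) * x ^ 3 + (1) * x ^ 5)) * cosh x + (((-105) + (315) * x ^ 2 + (5) * x ^ 4) + ((105) * x ^ 2 + (20) * x ^ 4)) * sinh x"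
    by (subst \<open>?l = _\<close>) (rule cs_lev8[OF x0])
qed simp

lemma cs_lev6:
  fixes x :: real assumes "0 \<le> x"
  shows "0 \<le> ((-45) * x ^ 1 + (45) * x ^ 3 + (1) * x ^ 5) * cosh x + ((45) + (-30) * x ^ 2 + (15) * x ^ 4) * sinh x"
proof (rule cs_step[where A="\<lambda>x. (-45) * x ^ 1 + (45) * x ^ 3 + (1) * x ^ 5" and B="\<lambda>x. (45) + (-30) * x ^ 2 + (15) * x ^ 4"
     and A'="\<lambda>x. (-45) + (135) * x ^ 2 + (5) * x ^ 4" and B'="\<lambda>x. (-60) * x ^ 1 + (60) * x ^ 3", OF _ _ _ _ assms])
  fix x :: real
  show "((\<lambda>x. (-45) * x ^ 1 + (45) * x ^ 3 + (1) * x ^ 5) has_real_derivative ((-45) + (135) * x ^ 2 + (5) * x ^ 4)) (at x)"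
    by (rule derivative_eq_intros refl | simp add: algebra_simps)+
  show "((\<lambda>x. (45) + (-30) * x ^ 2 + (15) * x ^ 4) has_real_derivative ((-60) * x ^ 1 + (60) * x ^ 3)) (at x)"
    by (rule derivative_eq_intros refl | simp add: algebra_simps)+
  assume x0: "0 \<le> x"
  have "(((-45) + (135) * x ^ 2 + (5) * x ^ 4) + ((45) + (-30) * x ^ 2 + (15) * x ^ 4)) * cosh x + (((-60) * x ^ 1 + (60) * x ^ 3) + ((-45) * x ^ 1 + (45) * x ^ 3 + (1) * x ^ 5)) * sinh x
      = ((105) * x ^ 2 + (20) * x ^ 4) * cosh x + ((-105) * x ^ 1 + (105) * x ^ 3 + (1) * x ^ 5) * sinh x" (is "?l = _") by algebra
  then show "0 \<le> (((-45) + (135) * x ^ 2 + (5) * x ^ 4) + ((45) + (-30) * x ^ 2 + (15) * x ^ 4)) * cosh x + (((-60) * x ^ 1 + (60) * x ^ 3) + ((-45) * x ^ 1 + (45) * x ^ 3 + (1) * x ^ 5)) * sinh x"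
    by (subst \<open>?l = _\<close>) (rule cs_lev7[OF x0])
qed simp

lemma cs_lev5:
  fixes x :: real assumes "0 \<le> x"
  shows "0 \<le> ((-45) * x ^ 2 + (10) * x ^ 4) * cosh x + ((45) * x ^ 1 + (5) * x ^ 3 + (1) * x ^ 5) * sinh x"
proof (rule cs_step[where A="\<lambda>x. (-45) * x ^ 2 + (10) * x ^ 4" and B="\<lambda>x. (45) * x ^ 1 + (5) * x ^ 3 + (1) * x ^ 5"
     and A'="\<lambda>x. (-90) * x ^ 1 + (40) * x ^ 3" and B'="\<lambda>x. (45) + (15) * x ^ 2 + (5) * x ^ 4", OF _ _ _ _ assms])
  fix x :: real
  show "((\<lambda>x. (-45) * x ^ 2 + (10) * x ^ 4) has_real_derivative ((-90) * x ^ 1 + (40) * x ^ 3)) (at x)"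
    by (rule derivative_eq_intros refl | simp add: algebra_simps)+
  show "((\<lambda>x. (45) * x ^ 1 + (5) * x ^ 3 + (1) * x ^ 5) has_real_derivative ((45) + (15) * x ^ 2 + (5) * x ^ 4)) (at x)"
    by (rule derivative_eq_intros refl | simp add: algebra_simps)+
  assume x0: "0 \<le> x"
  have "(((-90) * x ^ 1 + (40) * x ^ 3) + ((45) * x ^ 1 + (5) * x ^ 3 + (1) * x ^ 5)) * cosh x + (((45) + (15) * x ^ 2 + (5) * x ^ 4) + ((-45) * x ^ 2 + (10) * x ^ 4)) * sinh x
      = ((-45) * x ^ 1 + (45) * x ^ 3 + (1) * x ^ 5) * cosh x + ((45) + (-30) * x ^ 2 + (15) * x ^ 4) * sinh x" (is "?l = _") by algebra
  then show "0 \<le> (((-90) * x ^ 1 + (40) * x ^ 3) + ((45) * x ^ 1 + (5) * x ^ 3 + (1) * x ^ 5)) * cosh x + (((45) + (15) * x ^ 2 + (5) * x ^ 4) + ((-45) * x ^ 2 + (10) * x ^ 4)) * sinh x"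
    by (subst \<open>?l = _\<close>) (rule cs_lev6[OF x0])
qed simp

lemma cs_lev4:
  fixes x :: real assumes "0 \<le> x"
  shows "0 \<le> ((45) * x ^ 1 + (-15) * x ^ 3 + (1) * x ^ 5) * cosh x + ((-45) + (5) * x ^ 4) * sinh x"
proof (rule cs_step[where A="\<lambda>x. (45) * x ^ 1 + (-15) * x ^ 3 + (1) * x ^ 5" and B="\<lambda>x. (-45) + (5) * x ^ 4"
     and A'="\<lambda>x. (45) + (-45) * x ^ 2 + (5) * x ^ 4" and B'="\<lambda>x. (20) * x ^ 3", OF _ _ _ _ assms])
  fix x :: real
  show "((\<lambda>x. (45) * x ^ 1 + (-15) * x ^ 3 + (1) * x ^ 5) has_real_derivative ((45) + (-45) * x ^ 2 + (5) * x ^ 4)) (at x)"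
    by (rule derivative_eq_intros refl | simp add: algebra_simps)+
  show "((\<lambda>x. (-45) + (5) * x ^ 4) has_real_derivative ((20) * x ^ 3)) (at x)"
    by (rule derivative_eq_intros refl | simp add: algebra_simps)+
  assume x0: "0 \<le> x"
  have "(((45) + (-45) * x ^ 2 + (5) * x ^ 4) + ((-45) + (5) * x ^ 4)) * cosh x + (((20) * x ^ 3) + ((45) * x ^ 1 + (-15) * x ^ 3 + (1) * x ^ 5)) * sinh x
      = ((-45) * x ^ 2 + (10) * x ^ 4) * cosh x + ((45) * x ^ 1 + (5) * x ^ 3 + (1) * x ^ 5) * sinh x" (is "?l = _") by algebra
  then show "0 \<le> (((45) + (-45) * x ^ 2 + (5) * x ^ 4) + ((-45) + (5) * x ^ 4)) * cosh x + (((20) * x ^ 3) + ((45) * x ^ 1 + (-15) * x ^ 3 + (1) * x ^ 5)) * sinh x"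
    by (subst \<open>?l = _\<close>) (rule cs_lev5[OF x0])
qed simp

lemma cs_lev3:
  fixes x :: real assumes "0 \<le> x"
  shows "0 \<le> ((45) * x ^ 2) * cosh x + ((-45) * x ^ 1 + (-15) * x ^ 3 + (1) * x ^ 5) * sinh x"
proof (rule cs_step[where A="\<lambda>x. (45) * x ^ 2" and B="\<lambda>x. (-45) * x ^ 1 + (-15) * x ^ 3 + (1) * x ^ 5"
     and A'="\<lambda>x. (90) * x ^ 1" and B'="\<lambda>x. (-45) + (-45) * x ^ 2 + (5) * x ^ 4", OF _ _ _ _ assms])
  fix x :: real
  show "((\<lambda>x. (45) * x ^ 2) has_real_derivative ((90) * x ^ 1)) (at x)"
    by (rule derivative_eq_intros refl | simp add: algebra_simps)+
  show "((\<lambda>x. (-45) * x ^ 1 + (-15) * x ^ 3 + (1) * x ^ 5) has_real_derivative ((-45) + (-45) * x ^ 2 + (5) * x ^ 4)) (at x)"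
    by (rule derivative_eq_intros refl | simp add: algebra_simps)+
  assume x0: "0 \<le> x"
  have "(((90) * x ^ 1) + ((-45) * x ^ 1 + (-15) * x ^ 3 + (1) * x ^ 5)) * cosh x + (((-45) + (-45) * x ^ 2 + (5) * x ^ 4) + ((45) * x ^ 2)) * sinh x
      = ((45) * x ^ 1 + (-15) * x ^ 3 + (1) * x ^ 5) * cosh x + ((-45) + (5) * x ^ 4) * sinh x" (is "?l = _") by algebra
  then show "0 \<le> (((90) * x ^ 1) + ((-45) * x ^ 1 + (-15) * x ^ 3 + (1) * x ^ 5)) * cosh x + (((-45) + (-45) * x ^ 2 + (5) * x ^ 4) + ((45) * x ^ 2)) * sinh x"
    by (subst \<open>?l = _\<close>) (rule cs_lev4[OF x0])
qed simp

lemma cs_lev2: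
  fixes x :: real assumes "0 \<le> x"
  shows "0 \<le> ((-105) * x ^ 1 + (5) * x ^ 3 + (1) * x ^ 5) * cosh x + ((105) + (30) * x ^ 2 + (-5) * x ^ 4) * sinh x"
proof (rule cs_step[where A="\<lambda>x. (-105) * x ^ 1 + (5) * x ^ 3 + (1) * x ^ 5" and B="\<lambda>x. (105) + (30) * x ^ 2 + (-5) * x ^ 4"
     and A'="\<lambda>x. (-105) + (15) * x ^ 2 + (5) * x ^ 4" and B'="\<lambda>x. (60) * x ^ 1 + (-20) * x ^ 3", OF _ _ _ _ assms])
  fix x :: real
  show "((\<lambda>x. (-105) * x ^ 1 + (5) * x ^ 3 + (1) * x ^ 5) has_real_derivative ((-105) + (15) * x ^ 2 + (5) * x ^ 4)) (at x)"
    by (rule derivative_eq_intros refl | simp add: algebra_simps)+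
  show "((\<lambda>x. (105) + (30) * x ^ 2 + (-5) * x ^ 4) has_real_derivative ((60) * x ^ 1 + (-20) * x ^ 3)) (at x)"
    by (rule derivative_eq_intros refl | simp add: algebra_simps)+
  assume x0: "0 \<le> x"
  have "(((-105) + (15) * x ^ 2 + (5) * x ^ 4) + ((105) + (30) * x ^ 2 + (-5) * x ^ 4)) * cosh x + (((60) * x ^ 1 + (-20) * x ^ 3) + ((-105) * x ^ 1 + (5) * x ^ 3 + (1) * x ^ 5)) * sinh x
      = ((45) * x ^ 2) * cosh x + ((-45) * x ^ 1 + (-15) * x ^ 3 + (1) * x ^ 5) * sinh x" (is "?l = _") by algebra
  then show "0 \<le> (((-105) + (15) * x ^ 2 + (5) * x ^ 4) + ((105) + (30) * x ^ 2 + (-5) * x ^ 4)) * cosh x + (((60) * x ^ 1 + (-20) * x ^ 3) + ((-105) * x ^ 1 + (5) * x ^ 3 + (1) * x ^ 5)) * sinh x"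
    by (subst \<open>?l = _\<close>) (rule cs_lev3[OF x0])
qed simp

lemma cs_lev1:
  fixes x :: real assumes "0 \<le> x"
  shows "0 \<le> ((-105) * x ^ 2 + (-10) * x ^ 4) * cosh x + ((105) * x ^ 1 + (45) * x ^ 3 + (1) * x ^ 5) * sinh x"
proof (rule cs_step[where A="\<lambda>x. (-105) * x ^ 2 + (-10) * x ^ 4" and B="\<lambda>x. (105) * x ^ 1 + (45) * x ^ 3 + (1) * x ^ 5"
     and A'="\<lambda>x. (-210) * x ^ 1 + (-40) * x ^ 3" and B'="\<lambda>x. (105) + (135) * x ^ 2 + (5) * x ^ 4", OF _ _ _ _ assms])
  fix x :: real
  show "((\<lambda>x. (-105) * x ^ 2 + (-10) * x ^ 4) has_real_derivative ((-210) * x ^ 1 + (-40) * x ^ 3)) (at x)"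
    by (rule derivative_eq_intros refl | simp add: algebra_simps)+
  show "((\<lambda>x. (105) * x ^ 1 + (45) * x ^ 3 + (1) * x ^ 5) has_real_derivative ((105) + (135) * x ^ 2 + (5) * x ^ 4)) (at x)"
    by (rule derivative_eq_intros refl | simp add: algebra_simps)+
  assume x0: "0 \<le> x"
  have "(((-210) * x ^ 1 + (-40) * x ^ 3) + ((105) * x ^ 1 + (45) * x ^ 3 + (1) * x ^ 5)) * cosh x + (((105) + (135) * x ^ 2 + (5) * x ^ 4) + ((-105) * x ^ 2 + (-10) * x ^ 4)) * sinh x
      = ((-105) * x ^ 1 + (5) * x ^ 3 + (1) * x ^ 5) * cosh x + ((105) + (30) * x ^ 2 + (-5) * x ^ 4) * sinh x" (is "?l = _") by algebra
  then show "0 \<le> (((-210) * x ^ 1 + (-40) * x ^ 3) + ((105) * x ^ 1 + (45) * x ^ 3 + (1) * x ^ 5)) * cosh x + (((105) + (135) * x ^ 2 + (5) * x ^ 4) + ((-105) * x ^ 2 + (-10) * x ^ 4)) * sinh x"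
    by (subst \<open>?l = _\<close>) (rule cs_lev2[OF x0])
qed simp

lemma cs_lev0:
  fixes x :: real assumes "0 \<le> x"
  shows "0 \<le> ((945) * x ^ 1 + (105) * x ^ 3 + (1) * x ^ 5) * cosh x + ((-945) + (-420) * x ^ 2 + (-15) * x ^ 4) * sinh x"
proof (rule cs_step[where A="\<lambda>x. (945) * x ^ 1 + (105) * x ^ 3 + (1) * x ^ 5" and B="\<lambda>x. (-945) + (-420) * x ^ 2 + (-15) * x ^ 4"
     and A'="\<lambda>x. (945) + (315) * x ^ 2 + (5) * x ^ 4" and B'="\<lambda>x. (-840) * x ^ 1 + (-60) * x ^ 3", OF _ _ _ _ assms])
  fix x :: real
  show "((\<lambda>x. (945) * x ^ 1 + (105) * x ^ 3 + (1) * x ^ 5) has_real_derivative ((945) + (315) * x ^ 2 + (5) * x ^ 4)) (at x)"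
    by (rule derivative_eq_intros refl | simp add: algebra_simps)+
  show "((\<lambda>x. (-945) + (-420) * x ^ 2 + (-15) * x ^ 4) has_real_derivative ((-840) * x ^ 1 + (-60) * x ^ 3)) (at x)"
    by (rule derivative_eq_intros refl | simp add: algebra_simps)+
  assume x0: "0 \<le> x"
  have "(((945) + (315) * x ^ 2 + (5) * x ^ 4) + ((-945) + (-420) * x ^ 2 + (-15) * x ^ 4)) * cosh x + (((-840) * x ^ 1 + (-60) * x ^ 3) + ((945) * x ^ 1 + (105) * x ^ 3 + (1) * x ^ 5)) * sinh x
      = ((-105) * x ^ 2 + (-10) * x ^ 4) * cosh x + ((105) * x ^ 1 + (45) * x ^ 3 + (1) * x ^ 5) * sinh x" (is "?l = _") by algebra
  then show "0 \<le> (((945) + (315) * x ^ 2 + (5) * x ^ 4) + ((-945) + (-420) * x ^ 2 + (-15) * x ^ 4)) * cosh x + (((-840) * x ^ 1 + (-60) * x ^ 3) + ((945) * x ^ 1 + (105) * x ^ 3 + (1) * x ^ 5)) * sinh x"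
    by (subst \<open>?l = _\<close>) (rule cs_lev1[OF x0])
qed simp

lemma cert_q1:
  fixes z :: real
  assumes "(0) \<le> z" "z \<le> (1)"
  shows "0 \<le> (1) + (-3843246432805549/95367431640625) * z ^ 2 + (4392281637492056/19073486328125) * z ^ 3 + (-13882747318501677/19073486328125) * z ^ 4 + (30851428404521032/19073486328125) * z ^ 5 + (-52978614562533121/19073486328125) * z ^ 6 + (369023403487476496/95367431640625) * z ^ 7 + (-85801456875042678/19073486328125) * z ^ 8 + (84698045140032016/19073486328125) * z ^ 9 + (-71748280401296961/19073486328125) * z ^ 10 + (52459687020129928/19073486328125) * z ^ 11 + (-165872965838822319/95367431640625) * z ^ 12 + (18121413593756088/19073486328125) * z ^ 13 + (-8510933232868451/19073486328125) * z ^ 14 + (3408359526193776/19073486328125) * z ^ 15 + (-1148971895204518/19073486328125) * z ^ 16 + (1599657019826096/95367431640625) * z ^ 17 + (-71586933124091/19073486328125) * z ^ 18 + (12355393085112/19073486328125) * z ^ 19 + (-1541386289597/19073486328125) * z ^ 20 + (123528895336/19073486328125) * z ^ 21 + (-23863536599/95367431640625) * z ^ 22"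
proof -
  have e: "(95367431640625) + (-3843246432805549) * z ^ 2 + (21961408187460280) * z ^ 3 + (-69413736592508385) * z ^ 4 + (154257142022605160) * z ^ 5 + (-264893072812665605) * z ^ 6 + (369023403487476496) * z ^ 7 + (-429007284375213390) * z ^ 8 + (423490225700160080) * z ^ 9 + (-358741402006484805) * z ^ 10 + (262298435100649640) * z ^ 11 + (-165872965838822319) * z ^ 12 + (90607067968780440) * z ^ 13 + (-42554666164342255) * z ^ 14 + (17041797630968880) * z ^ 15 + (-5744859476022590) * z ^ 16 + (1599657019826096) * z ^ 17 + (-357934665620455) * z ^ 18 + (61776965425560) * z ^ 19 + (-7706931447985) * z ^ 20 + (617644476680) * z ^ 21 + (-23863536599) * z ^ 22 = (95367431640625) * ((1) - (1) * z) ^ 22 + (2098083496093750) * ((1) * z - (0)) ^ 1 * ((1) - (1) * z) ^ 21 + (18186630276178826) * ((1) * z - (0)) ^ 2 * ((1) - (1) * z) ^ 20 + (91962324257911800) * ((1) * z - (0)) ^ 3 * ((1) - (1) * z) ^ 19 + (315248959187354500) * ((1) * z - (0)) ^ 4 * ((1) - (1) * z) ^ 18 + (790315694839055000) * ((1) * z - (0)) ^ 5 * ((1) - (1) * z) ^ 17 + (1512902386625918750) * ((1) * z - (0)) ^ 6 * ((1) - (1) * z) ^ 16 + (2269165196169850000) * ((1) * z - (0)) ^ 7 * ((1) - (1) * z) ^ 15 + (2706663916680625000) * ((1) * z - (0)) ^ 8 * ((1) - (1) * z) ^ 14 + (2585959042493750000) * ((1) * z - (0)) ^ 9 * ((1)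 - (1) * z) ^ 13 + (1980464264173828125) * ((1) * z - (0)) ^ 10 * ((1) - (1) * z) ^ 12 + (1209348577226562500) * ((1) * z - (0)) ^ 11 * ((1) - (1) * z) ^ 11 + (581651810673828125) * ((1) * z - (0)) ^ 12 * ((1) - (1) * z) ^ 10 + (215704408691406250) * ((1) * z - (0)) ^ 13 * ((1) - (1) * z) ^ 9 + (59553975830078125) * ((1) * z - (0)) ^ 14 * ((1) - (1) * z) ^ 8 + (11532275390625000) * ((1) * z - (0)) ^ 15 * ((1) - (1) * z) ^ 7 + (1398162841796875) * ((1) * z - (0)) ^ 16 * ((1) - (1) * z) ^ 6 + (79895019531250) * ((1) * z - (0)) ^ 17 * ((1) - (1) * z) ^ 5"
    by algebra
  have h1: "0 \<le> (1) * z - (0)" using assms by simp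
  have h2: "0 \<le> (1) - (1) * z" using assms by simp
  have "0 \<le> (95367431640625) * ((1) - (1) * z) ^ 22 + (2098083496093750) * ((1) * z - (0)) ^ 1 * ((1) - (1) * z) ^ 21 + (18186630276178826) * ((1) * z - (0)) ^ 2 * ((1) - (1) * z) ^ 20 + (91962324257911800) * ((1) * z - (0)) ^ 3 * ((1) - (1) * z) ^ 19 + (315248959187354500) * ((1) * z - (0)) ^ 4 * ((1) - (1) * z) ^ 18 + (790315694839055000) * ((1) * z - (0)) ^ 5 * ((1) - (1) * z) ^ 17 + (1512902386625918750) * ((1) * z - (0)) ^ 6 * ((1) - (1) * z) ^ 16 + (2269165196169850000) * ((1) * z - (0)) ^ 7 * ((1) - (1) * z) ^ 15 + (2706663916680625000) * ((1) * z - (0)) ^ 8 * ((1) - (1) * z) ^ 14 + (2585959042493750000) * ((1) * z - (0)) ^ 9 * ((1) - (1) * z) ^ 13 + (1980464264173828125) * ((1) * z - (0)) ^ 10 * ((1) - (1) * z) ^ 12 + (1209348577226562500) * ((1) * z - (0)) ^ 11 * ((1) - (1) * z) ^ 11 + (581651810673828125) * ((1) * z - (0)) ^ 12 * ((1) - (1) * z) ^ 10 + (215704408691406250) * ((1) * z - (0)) ^ 13 * ((1) - (1) * z) ^ 9 + (59553975830078125) * ((1) * z - (0)) ^ 14 * ((1) - (1) * z) ^ 8 + (11532275390625000) * ((1) * z - (0)) ^ 15 * ((1) - (1) * z) ^ 7 + (1398162841796875) * ((1) * z - (0)) ^ 16 * ((1) - (1) * z) ^ 6 + (79895019531250) * ((1)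 * z - (0)) ^ 17 * ((1) - (1) * z) ^ 5"
    using h1 h2 by (intro add_nonneg_nonneg mult_nonneg_nonneg zero_le_power; simp)
  then have "0 \<le> (95367431640625) + (-3843246432805549) * z ^ 2 + (21961408187460280) * z ^ 3 + (-69413736592508385) * z ^ 4 + (154257142022605160) * z ^ 5 + (-264893072812665605) * z ^ 6 + (369023403487476496) * z ^ 7 + (-429007284375213390) * z ^ 8 + (423490225700160080) * z ^ 9 + (-358741402006484805) * z ^ 10 + (262298435100649640) * z ^ 11 + (-165872965838822319) * z ^ 12 + (90607067968780440) * z ^ 13 + (-42554666164342255) * z ^ 14 + (17041797630968880) * z ^ 15 + (-5744859476022590) * z ^ 16 + (1599657019826096) * z ^ 17 + (-357934665620455) * z ^ 18 + (61776965425560) * z ^ 19 + (-7706931447985) * z ^ 20 + (617644476680) * z ^ 21 + (-23863536599) * z ^ 22" by (simp only: e)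
  then show ?thesis by simp
qed

lemma cert_q2:
  fixes z :: real
  assumes "(1/4) \<le> z" "z \<le> (1)"
  shows "0 \<le> (17210368/30517578125) + (77446656/6103515625) * z ^ 1 + (674892288/6103515625) * z ^ 2 + (-3360920553/6103515625) * z ^ 3 + (4503167424/6103515625) * z ^ 4 + (-2225702304/30517578125) * z ^ 5 + (-4418489152/6103515625) * z ^ 6 + (5018361264/6103515625) * z ^ 7 + (-2944305504/6103515625) * z ^ 8 + (1161109712/6103515625) * z ^ 9 + (-1646090496/30517578125) * z ^ 10 + (69274296/6103515625) * z ^ 11 + (-10728452/6103515625) * z ^ 12 + (1191582/6103515625) * z ^ 13 + (-86436/6103515625) * z ^ 14 + (16807/30517578125) * z ^ 15"
proof -
  have e: "(1016255020032) + (22865737950720) * z ^ 1 + (199258573570560) * z ^ 2 + (-992294988670485) * z ^ 3 + (1329537666098880) * z ^ 4 + (-131425495348896) * z ^ 5 + (-1304536829682240) * z ^ 6 + (1481646071389680) * z ^ 7 + (-869291478528480) * z ^ 8 + (342811836919440) * z ^ 9 + (-97199997698304) * z ^ 10 + (20452889522520) * z ^ 11 + (-3167521810740) * z ^ 12 + (351808627590) * z ^ 13 + (-25519796820) * z ^ 14 + (992436543) * z ^ 15 = (636571610864557) * ((1) - (1) * z) ^ 15 + (2548166164756775) * ((4) * z - (1)) ^ 1 * ((1) - (1) * z) ^ 14 + (4430055826405375) * ((4) * z - (1)) ^ 2 * ((1) - (1) * z) ^ 13 + (4434968611093125) * ((4) * z - (1)) ^ 3 * ((1) - (1) * z) ^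 12 + (2857951173103125) * ((4) * z - (1)) ^ 4 * ((1) - (1) * z) ^ 11 + (1251893603409375) * ((4) * z - (1)) ^ 5 * ((1) - (1) * z) ^ 10 + (382220075859375) * ((4) * z - (1)) ^ 6 * ((1) - (1) * z) ^ 9 + (81664395703125) * ((4) * z - (1)) ^ 7 * ((1) - (1) * z) ^ 8 + (12005255859375) * ((4) * z - (1)) ^ 8 * ((1) - (1) * z) ^ 7 + (1159580078125) * ((4) * z - (1)) ^ 9 * ((1) - (1) * z) ^ 6 + (66376953125) * ((4) * z - (1)) ^ 10 * ((1) - (1) * z) ^ 5 + (1708984375) * ((4) * z - (1)) ^ 11 * ((1) - (1) * z) ^ 4"
    by algebra
  have h1: "0 \<le> (4) * z - (1)" using assms by simp
  have h2: "0 \<le> (1) - (1) * z" using assms by simp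
  have "0 \<le> (636571610864557) * ((1) - (1) * z) ^ 15 + (2548166164756775) * ((4) * z - (1)) ^ 1 * ((1) - (1) * z) ^ 14 + (4430055826405375) * ((4) * z - (1)) ^ 2 * ((1) - (1) * z) ^ 13 + (4434968611093125) * ((4) * z - (1)) ^ 3 * ((1) - (1) * z) ^ 12 + (2857951173103125) * ((4) * z - (1)) ^ 4 * ((1) - (1) * z) ^ 11 + (1251893603409375) * ((4) * z - (1)) ^ 5 * ((1) - (1) * z) ^ 10 + (382220075859375) * ((4) * z - (1)) ^ 6 * ((1) - (1) * z) ^ 9 + (81664395703125) * ((4) * z - (1)) ^ 7 * ((1) - (1) * z) ^ 8 + (12005255859375) * ((4) * z - (1)) ^ 8 * ((1) - (1) * z) ^ 7 + (1159580078125) * ((4) * z - (1)) ^ 9 * ((1) - (1) * z) ^ 6 + (66376953125) * ((4) * z - (1)) ^ 10 * ((1) - (1) * z) ^ 5 + (1708984375) * ((4) * z - (1)) ^ 11 * ((1) - (1) * z) ^ 4"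
    using h1 h2 by (intro add_nonneg_nonneg mult_nonneg_nonneg zero_le_power; simp)
  then have "0 \<le> (1016255020032) + (22865737950720) * z ^ 1 + (199258573570560) * z ^ 2 + (-992294988670485) * z ^ 3 + (1329537666098880) * z ^ 4 + (-131425495348896) * z ^ 5 + (-1304536829682240) * z ^ 6 + (1481646071389680) * z ^ 7 + (-869291478528480) * z ^ 8 + (342811836919440) * z ^ 9 + (-97199997698304) * z ^ 10 + (20452889522520) * z ^ 11 + (-3167521810740) * z ^ 12 + (351808627590) * z ^ 13 + (-25519796820) * z ^ 14 + (992436543) * z ^ 15" by (simp only: e)
  then show ?thesis by simp
qed

lemma cert_na:
  fixes y :: real
  assumes "(0) \<le> y" "y \<le> (256/25)"
  shows "(1) \<le> (893025) + (-99225) * y ^ 1 + (6300) * y ^ 2 + (-315) * y ^ 3 + (15) * y ^ 4 + (-1) * y ^ 5"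
proof -
  have e: "(30684070996344832) + (-3409345039564800) * y ^ 1 + (216466351718400) * y ^ 2 + (-10823317585920) * y ^ 3 + (515396075520) * y ^ 4 + (-34359738368) * y ^ 5 = (27907) * ((256) - (25) * y) ^ 5 + (2694575) * ((1) * y - (0)) ^ 1 * ((256) - (25) * y) ^ 4 + (107941150) * ((1) * y - (0)) ^ 2 * ((256) - (25) * y) ^ 3 + (2186248030) * ((1) * y - (0)) ^ 3 * ((256) - (25) * y) ^ 2 + (22841089295) * ((1) * y - (0)) ^ 4 * ((256) - (25) * y) ^ 1 + (76803881507) * ((1) * y - (0)) ^ 5"
    by algebra
  have h1: "0 \<le> (1) * y - (0)" using assms by simp
  have h2: "0 \<le> (256) - (25) * y" using assms by simp
  have "0 \<le> (27907) * ((256) - (25) * y) ^ 5 + (2694575) * ((1) * y - (0)) ^ 1 * ((256) - (25) * y) ^ 4 + (107941150) * ((1) * y - (0)) ^ 2 * ((256) - (25) * y) ^ 3 + (2186248030) * ((1) * y - (0)) ^ 3 * ((256) - (25) * y) ^ 2 + (22841089295) * ((1) * y - (0)) ^ 4 * ((256) - (25) * y) ^ 1 + (76803881507) * ((1) * y - (0)) ^ 5"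
    using h1 h2 by (intro add_nonneg_nonneg mult_nonneg_nonneg zero_le_power; simp)
  then have "0 \<le> (30684070996344832) + (-3409345039564800) * y ^ 1 + (216466351718400) * y ^ 2 + (-10823317585920) * y ^ 3 + (515396075520) * y ^ 4 + (-34359738368) * y ^ 5" by (simp only: e)
  then show ?thesis by simp
qed

lemma cert_c4:
  fixes y :: real
  assumes "(0) \<le> y" "y \<le> (256/25)"
  shows "0 \<le> (297675) * y ^ 1 + (6615) * y ^ 2 + (525) * y ^ 3 + (-14) * y ^ 4 + (1) * y ^ 5"
proof -
  have e: "(1278504389836800) * y ^ 1 + (28411208663040) * y ^ 2 + (2254857830400) * y ^ 3 + (-60129542144) * y ^ 4 + (4294967296) * y ^ 5 = (297675) * ((1) * y - (0)) ^ 1 * ((256) - (25) * y) ^ 4 + (31460940) * ((1) * y - (0)) ^ 2 * ((256) - (25) * y) ^ 3 + (1277695650) * ((1) * y - (0)) ^ 3 * ((256) - (25) * y) ^ 2 + (23265326476) * ((1) * y - (0)) ^ 4 * ((256) - (25) * y) ^ 1 + (162666238571) * ((1) * y - (0)) ^ 5"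
    by algebra
  have h1: "0 \<le> (1) * y - (0)" using assms by simp
  have h2: "0 \<le> (256) - (25) * y" using assms by simp
  have "0 \<le> (297675) * ((1) * y - (0)) ^ 1 * ((256) - (25) * y) ^ 4 + (31460940) * ((1) * y - (0)) ^ 2 * ((256) - (25) * y) ^ 3 + (1277695650) * ((1) * y - (0)) ^ 3 * ((256) - (25) * y) ^ 2 + (23265326476) * ((1) * y - (0)) ^ 4 * ((256) - (25) * y) ^ 1 + (162666238571) * ((1) * y - (0)) ^ 5"
    using h1 h2 by (intro add_nonneg_nonneg mult_nonneg_nonneg zero_le_power; simp)
  then have "0 \<le> (1278504389836800) * y ^ 1 + (28411208663040) * y ^ 2 + (2254857830400) * y ^ 3 + (-60129542144) * y ^ 4 + (4294967296) * y ^ 5" by (simp only: e)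
  then show ?thesis by simp
qed

lemma cert_P1:
  fixes y :: real
  assumes "(0) \<le> y" "y \<le> (256/25)"
  shows "(1) \<le> (973829509910210984627601712968750000) + (1581120412618106445874536670083984375) * y ^ 1 + (844900150588897469480278094647265625) * y ^ 2 + (128768962750065321470549270047968750) * y ^ 3 + (-16060988507204888478379326336046875) * y ^ 4 + (-1283026202794389339060715642275000) * y ^ 5 + (1393575999719289104164357256388750) * y ^ 6 + (361023861476169003221297836617375) * y ^ 7 + (46907540365081853503432487349675) * y ^ 8 + (3732982898740317479180132917155) * y ^ 9 + (185407049244301748685879803046) * y ^ 10 + (19240181384309681030112662568/5) * y ^ 11 + (-208407223943496187055500005) * y ^ 12 + (-640538052968012718313424196/25) * y ^ 13 + (-37138218412766139247608918/25) * y ^ 14 + (-8032770569907112057070553/125) * y ^ 15 + (-296714389940302682317599/125) * y ^ 16 + (-49416488656735338799164/625) * y ^ 17 + (-1520780602313466179028/625) * y ^ 18 + (-219945872027367354267/3125) * y ^ 19 + (-1327669513083981963/625) * y ^ 20 + (-188155019270313963/3125) * y ^ 21 + (-4735474714374789/3125) * y ^ 22 + (-545020690599763/15625) * y ^ 23 + (-69501821902663/78125) * y ^ 24 + (-1856910912572/78125) * y ^ 25 + (-17793465613/78125) * y ^ 26 + (-456416212/78125) * y ^ 27 + (-14555723/78125) * y ^ 28"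
proof -
  have e: "(2051124347662244811069629152677439450846794221281953326164722190587038364854306968661035797313780449280000000) + (3330228281134950255750550665944342667364033088735375643449838511167309105736739134485540372480000000000000000) * y ^ 1 + (1779567421792517187868624943826268930669878971226868905694882543370198147007034555949660504064000000000000000) * y ^ 2 + (271219091259849097478154116101253730619393293858143512437403914187025092774470681380628568473600000000000000) * y ^ 3 + (-33828390123122122080442504232667411064378347777887328875071415676007771604701962342227100303360000000000000) * y ^ 4 + (-2702368593741682636847782848381556157971117247359215756006937033937253885895056211353626738688000000000000) * y ^ 5 + (2935213642894778845459052595294854591490034682296139396634765006287407175783886103652159874662400000000000) * y ^ 6 + (760405003981741935834953427395315725450783562054966777083624752785305103529775783367833037045760000000000) * y ^ 7 + (98798811447642392327420125992638854598689767462358463210485649922927401713374591564016062038016000000000) * y ^ 8 + (7862579676517527851461405197662053898959298267984328714901275718719102893971176583941987080601600000000) * y ^ 9 + (390512824948449021722979343458925447839790243522794012829456720203874010379813764376548207493120000000) * y ^ 10 + (8104910374801462002448555316836842815480511299551788631636984749776959427086734871519184289792000000) * y ^ 11 + (-438956847075435706715320843725800788188285126886029018541983223411605796456369415136057753600000000) * y ^ 12 + (-53965224207181670198384754949760352454103055444904575269795667932124449285805818012955888844800000) * y ^ 13 + (-3128888711628646873921968083519864640394083965036174002451212146788161755513613989769012838400000) * y ^ 14 + (-135351916346345619444920511410190122484694781873602620366421478980802521660909944632015585280000) * y ^ 15 + (-4999627580104186639934293024050319486087109467957315668183497968776153428544074193032970240000) * y ^ 16 + (-166533237332929911758006594477148898304803608974994623610517419377918953716977447026556928000)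 * y ^ 17 + (-5125020491351034385021154246762578504073204321520621942588022098891414118178734794080256000) * y ^ 18 + (-148243224487944090911381876841701222220424230185863756463936201647082602529374660775116800) * y ^ 19 + (-4474237408043251534663324283051132317033276734711520978380936330778159618365509861376000) * y ^ 20 + (-126816232117109133307346492081335309408106148352902039407830390076642267879424865075200) * y ^ 21 + (-3191703643579618015700063078311035664851912104616220108608248694222348682647935385600) * y ^ 22 + (-73468643755316102638805720290683610614635180072576745084711514962514604364702679040) * y ^ 23 + (-1873765411765596685454621606155849634059639113363888929702929779505203960724062208) * y ^ 24 + (-50062219168591144476108785684104914385861952952055974412581415133555494907543552) * y ^ 25 + (-479710883950258865877356913736236001047322554921990418539851181259579256209408) * y ^ 26 + (-12304956733542919848458376827364350201700473719832895508136751369471542689792) * y ^ 27 + (-392421515781817912123949948843478639647765676725495529296366885087549063168) * y ^ 28 = (76080430461735233174031383825683593671875) * ((256) - (25) * y) ^ 28 + (84878709575576792139312702079658203070312500) * ((1) * y - (0)) ^ 1 * ((256) - (25) * y) ^ 27 + (43645016037944540900410183319545538067480468750) * ((1) * y - (0)) ^ 2 * ((256) - (25) * y) ^ 26 + (13812140600637630675958504937794033996391601562500) * ((1) * y - (0)) ^ 3 * ((256) - (25) * y) ^ 25 + (3032532243692003212150161270256541488719547119140625) * ((1) * y - (0)) ^ 4 * ((256) - (25) * y) ^ 24 + (493847589882208783222060736375157751201980779296875000) * ((1) * y - (0)) ^ 5 * ((256) - (25) * y) ^ 23 + (62293819367710342870678728094642680479029535895117187500) * ((1) * y - (0)) ^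 6 * ((256) - (25) * y) ^ 22 + (6279023696726810277341008396388553757624564789129921875000) * ((1) * y - (0)) ^ 7 * ((256) - (25) * y) ^ 21 + (518341408049733925395132677565659235497280678102520248046875) * ((1) * y - (0)) ^ 8 * ((256) - (25) * y) ^ 20 + (35803596750877174196911559146718683121721640441893081435937500) * ((1) * y - (0)) ^ 9 * ((256) - (25) * y) ^ 19 + (2112199677484282849860484819498499768234865692198728401277031250) * ((1) * y - (0)) ^ 10 * ((256) - (25) * y) ^ 18 + (108643928418561019285635823069502972697213901059000877384614187500) * ((1) * y - (0)) ^ 11 * ((256) - (25) * y) ^ 17 + (4970547798466472281390426825764810206768689646410103183408994140625) * ((1) * y - (0)) ^ 12 * ((256) - (25) * y) ^ 16 + (205560258223400746998221072147191102358866348476746320072584396450000) * ((1) * y - (0)) ^ 13 * ((256) - (25) * y) ^ 15 + (7746734206010976154606085633759369228836455258591241264340336040225000) * ((1) * y - (0)) ^ 14 * ((256) - (25) * y) ^ 14 + (265443713441410075986825607881171503907755847306486862154498853847170000) * ((1) * y - (0)) ^ 15 * ((256) - (25) * y) ^ 13 + (8181552095931104120610195358843707515012269128804204431129834710221800625) * ((1) * y - (0)) ^ 16 * ((256) - (25) * y) ^ 12 + (223480737443015105957170486908589191501043120369403606588467811666836099500) * ((1) * y - (0)) ^ 17 * ((256) - (25) * y) ^ 11 + (5327677549078569869750562576635837288352990564271313846178656151156068375250) * ((1) * y - (0)) ^ 18 * ((256) - (25) * y) ^ 10 + (109290497054179652770377640801926285864096893014495885666085316748587072476700) * ((1) * y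 - (0)) ^ 19 * ((256) - (25) * y) ^ 9 + (1903793286497235288860588043997382796205084843091547773947357595040702939130875) * ((1) * y - (0)) ^ 20 * ((256) - (25) * y) ^ 8 + (27782373064520755487567393001002876672932385044779096949534267744694783363791800) * ((1) * y - (0)) ^ 21 * ((256) - (25) * y) ^ 7 + (334430315576100239937535016899012322752424363497660064192912462565287886588969900) * ((1) * y - (0)) ^ 22 * ((256) - (25) * y) ^ 6 + (3256414073476874525739907215898961452125215195055513760527806494051083247355491960) * ((1) * y - (0)) ^ 23 * ((256) - (25) * y) ^ 5 + (24973539288961719968941835486347306043113030310522980111105924512174008371543518577) * ((1) * y - (0)) ^ 24 * ((256) - (25) * y) ^ 4 + (145045679006336533067523221024528971133536154352823675356231525466169771491751058628) * ((1) * y - (0)) ^ 25 * ((256) - (25) * y) ^ 3 + (599075334576051699567099934508695300903664278368797739840129544271954471283693985422) * ((1) * y - (0)) ^ 26 * ((256) - (25) * y) ^ 2 + (1566373740359701460170850114739717273789705656089177893535102488327758153496564692468) * ((1) * y - (0)) ^ 27 * ((256) - (25) * y) ^ 1 + (1946935505157200281743347547297838008556711607593898491619180982940591567734240687907) * ((1) * y - (0)) ^ 28"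
    by algebra
  have h1: "0 \<le> (1) * y - (0)" using assms by simp
  have h2: "0 \<le> (256) - (25) * y" using assms by simp
  have "0 \<le> (76080430461735233174031383825683593671875) * ((256) - (25) * y) ^ 28 + (84878709575576792139312702079658203070312500) * ((1) * y - (0)) ^ 1 * ((256) - (25) * y) ^ 27 + (43645016037944540900410183319545538067480468750) * ((1) * y - (0)) ^ 2 * ((256) - (25) * y) ^ 26 + (13812140600637630675958504937794033996391601562500) * ((1) * y - (0)) ^ 3 * ((256) - (25) * y) ^ 25 + (3032532243692003212150161270256541488719547119140625) * ((1) * y - (0)) ^ 4 * ((256) - (25) * y) ^ 24 + (493847589882208783222060736375157751201980779296875000) * ((1) * y - (0)) ^ 5 * ((256) - (25) * y) ^ 23 + (62293819367710342870678728094642680479029535895117187500) * ((1) * y - (0)) ^ 6 * ((256) - (25) * y) ^ 22 + (6279023696726810277341008396388553757624564789129921875000) * ((1) * y - (0)) ^ 7 * ((256) - (25) * y) ^ 21 + (518341408049733925395132677565659235497280678102520248046875) * ((1) * y - (0)) ^ 8 * ((256) - (25) * y) ^ 20 + (35803596750877174196911559146718683121721640441893081435937500) * ((1) * y - (0)) ^ 9 * ((256) - (25) * y) ^ 19 + (2112199677484282849860484819498499768234865692198728401277031250) * ((1) * y - (0)) ^ 10 * ((256) - (25) * y) ^ 18 + (108643928418561019285635823069502972697213901059000877384614187500) * ((1) * y - (0)) ^ 11 * ((256) - (25) * y) ^ 17 + (4970547798466472281390426825764810206768689646410103183408994140625) * ((1) * y - (0)) ^ 12 * ((256) - (25) * y)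 ^ 16 + (205560258223400746998221072147191102358866348476746320072584396450000) * ((1) * y - (0)) ^ 13 * ((256) - (25) * y) ^ 15 + (7746734206010976154606085633759369228836455258591241264340336040225000) * ((1) * y - (0)) ^ 14 * ((256) - (25) * y) ^ 14 + (265443713441410075986825607881171503907755847306486862154498853847170000) * ((1) * y - (0)) ^ 15 * ((256) - (25) * y) ^ 13 + (8181552095931104120610195358843707515012269128804204431129834710221800625) * ((1) * y - (0)) ^ 16 * ((256) - (25) * y) ^ 12 + (223480737443015105957170486908589191501043120369403606588467811666836099500) * ((1) * y - (0)) ^ 17 * ((256) - (25) * y) ^ 11 + (5327677549078569869750562576635837288352990564271313846178656151156068375250) * ((1) * y - (0)) ^ 18 * ((256) - (25) * y) ^ 10 + (109290497054179652770377640801926285864096893014495885666085316748587072476700) * ((1) * y - (0)) ^ 19 * ((256) - (25) * y) ^ 9 + (1903793286497235288860588043997382796205084843091547773947357595040702939130875) * ((1) * y - (0)) ^ 20 * ((256) - (25) * y) ^ 8 + (27782373064520755487567393001002876672932385044779096949534267744694783363791800) * ((1) * y - (0)) ^ 21 * ((256) - (25) * y) ^ 7 + (334430315576100239937535016899012322752424363497660064192912462565287886588969900) * ((1) * y - (0)) ^ 22 * ((256) - (25) * y) ^ 6 + (3256414073476874525739907215898961452125215195055513760527806494051083247355491960) * ((1) * y - (0)) ^ 23 * ((256) - (25) * y) ^ 5 + (24973539288961719968941835486347306043113030310522980111105924512174008371543518577) * ((1) * y - (0)) ^ 24 * ((256) - (25) * y) ^ 4 + (145045679006336533067523221024528971133536154352823675356231525466169771491751058628)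 * ((1) * y - (0)) ^ 25 * ((256) - (25) * y) ^ 3 + (599075334576051699567099934508695300903664278368797739840129544271954471283693985422) * ((1) * y - (0)) ^ 26 * ((256) - (25) * y) ^ 2 + (1566373740359701460170850114739717273789705656089177893535102488327758153496564692468) * ((1) * y - (0)) ^ 27 * ((256) - (25) * y) ^ 1 + (1946935505157200281743347547297838008556711607593898491619180982940591567734240687907) * ((1) * y - (0)) ^ 28"
    using h1 h2 by (intro add_nonneg_nonneg mult_nonneg_nonneg zero_le_power; simp)
  then have "0 \<le> (2051124347662244811069629152677439450846794221281953326164722190587038364854306968661035797313780449280000000) + (3330228281134950255750550665944342667364033088735375643449838511167309105736739134485540372480000000000000000) * y ^ 1 + (1779567421792517187868624943826268930669878971226868905694882543370198147007034555949660504064000000000000000) * y ^ 2 + (271219091259849097478154116101253730619393293858143512437403914187025092774470681380628568473600000000000000) * y ^ 3 + (-33828390123122122080442504232667411064378347777887328875071415676007771604701962342227100303360000000000000) * y ^ 4 + (-2702368593741682636847782848381556157971117247359215756006937033937253885895056211353626738688000000000000) * y ^ 5 + (2935213642894778845459052595294854591490034682296139396634765006287407175783886103652159874662400000000000) * y ^ 6 + (760405003981741935834953427395315725450783562054966777083624752785305103529775783367833037045760000000000) * y ^ 7 + (98798811447642392327420125992638854598689767462358463210485649922927401713374591564016062038016000000000) * y ^ 8 + (7862579676517527851461405197662053898959298267984328714901275718719102893971176583941987080601600000000) * y ^ 9 + (390512824948449021722979343458925447839790243522794012829456720203874010379813764376548207493120000000) * y ^ 10 + (8104910374801462002448555316836842815480511299551788631636984749776959427086734871519184289792000000)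 * y ^ 11 + (-438956847075435706715320843725800788188285126886029018541983223411605796456369415136057753600000000) * y ^ 12 + (-53965224207181670198384754949760352454103055444904575269795667932124449285805818012955888844800000) * y ^ 13 + (-3128888711628646873921968083519864640394083965036174002451212146788161755513613989769012838400000) * y ^ 14 + (-135351916346345619444920511410190122484694781873602620366421478980802521660909944632015585280000) * y ^ 15 + (-4999627580104186639934293024050319486087109467957315668183497968776153428544074193032970240000) * y ^ 16 + (-166533237332929911758006594477148898304803608974994623610517419377918953716977447026556928000) * y ^ 17 + (-5125020491351034385021154246762578504073204321520621942588022098891414118178734794080256000) * y ^ 18 + (-148243224487944090911381876841701222220424230185863756463936201647082602529374660775116800) * y ^ 19 + (-4474237408043251534663324283051132317033276734711520978380936330778159618365509861376000) * y ^ 20 + (-126816232117109133307346492081335309408106148352902039407830390076642267879424865075200) * y ^ 21 + (-3191703643579618015700063078311035664851912104616220108608248694222348682647935385600) * y ^ 22 + (-73468643755316102638805720290683610614635180072576745084711514962514604364702679040) * y ^ 23 + (-1873765411765596685454621606155849634059639113363888929702929779505203960724062208) * y ^ 24 + (-50062219168591144476108785684104914385861952952055974412581415133555494907543552) * y ^ 25 + (-479710883950258865877356913736236001047322554921990418539851181259579256209408) * y ^ 26 + (-12304956733542919848458376827364350201700473719832895508136751369471542689792) * y ^ 27 + (-392421515781817912123949948843478639647765676725495529296366885087549063168) * y ^ 28" by (simp only: e)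
  then show ?thesis by simp
qed

lemma MB_pos:
  fixes y :: real assumes "0 \<le> y"
  shows "0 < (945 + 420 * y + 15 * y ^ 2) ^ 3 + 3/5 * ((945 + 105 * y + y ^ 2) - (945 + 420 * y + 15 * y ^ 2)) * (945 + 420 * y + 15 * y ^ 2) ^ 2 - 3/25 * ((945 + 105 * y + y ^ 2) - (945 + 420 * y + 15 * y ^ 2)) ^ 2 * (945 + 420 * y + 15 * y ^ 2) + 7/125 * ((945 + 105 * y + y ^ 2) - (945 + 420 * y + 15 * y ^ 2)) ^ 3"
proof -
  have "(945 + 420 * y + 15 * y ^ 2) ^ 3 + 3/5 * ((945 + 105 * y + y ^ 2) - (945 + 420 * y + 15 * y ^ 2)) * (945 + 420 * y + 15 * y ^ 2) ^ 2 - 3/25 * ((945 + 105 * y + y ^ 2) - (945 + 420 * y + 15 * y ^ 2)) ^ 2 * (945 + 420 * y + 15 * y ^ 2) + 7/125 * ((945 + 105 * y + y ^ 2) - (945 + 420 * y + 15 * y ^ 2)) ^ 3 = (843908625) + (956429775) * y ^ 1 + (371498400) * y ^ 2 + (56691873) * y ^ 3 + (17979192/5) * y ^ 4 + (2475207/25) * y ^ 5 + (122317/125) * y ^ 6" by algebra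
  moreover have "0 < (843908625) + (956429775) * y ^ 1 + (371498400) * y ^ 2 + (56691873) * y ^ 3 + (17979192/5) * y ^ 4 + (2475207/25) * y ^ 5 + (122317/125) * y ^ 6"
    using assms by (intro add_pos_nonneg mult_nonneg_nonneg zero_le_power; simp)
  ultimately show ?thesis by simp
qed

lemma P_ident:
  fixes y :: real
  shows "(((945 + 420 * y + 15 * y ^ 2) ^ 2 - y * ((945 + 105 * y + y ^ 2) ^ 2)) * (((945 + 105 * y + y ^ 2) ^ 2) ^ 4 - 2/5 * (((945 + 420 * y + 15 * y ^ 2) ^ 2 - y * ((945 + 105 * y + y ^ 2) ^ 2)) - ((945 + 105 * y + y ^ 2) ^ 2)) * ((945 + 105 * y + y ^ 2) ^ 2) ^ 3 + 7/25 * (((945 + 420 * y + 15 * y ^ 2) ^ 2 - y * ((945 + 105 * y + y ^ 2) ^ 2)) - ((945 + 105 * y + y ^ 2) ^ 2)) ^ 2 * ((945 + 105 * y + y ^ 2) ^ 2) ^ 2 - 28/125 * (((945 + 420 * y + 15 * y ^ 2) ^ 2 - y * ((945 + 105 * y + y ^ 2) ^ 2)) - ((945 + 105 * y + y ^ 2) ^ 2)) ^ 3 * ((945 + 105 * y + y ^ 2) ^ 2) + 119/625 * (((945 + 420 * y + 15 * y ^ 2) ^ 2 - y * ((945 + 105 * y + y ^ 2) ^ 2)) - ((945 + 105 * y + y ^ 2) ^ 2)) ^ 4)) * ((945 + 420 * y + 15 * y ^ 2) ^ 3 + 3/5 * ((945 + 105 * y + y ^ 2) - (945 + 420 * y + 15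 * y ^ 2)) * (945 + 420 * y + 15 * y ^ 2) ^ 2 - 3/25 * ((945 + 105 * y + y ^ 2) - (945 + 420 * y + 15 * y ^ 2)) ^ 2 * (945 + 420 * y + 15 * y ^ 2) + 7/125 * ((945 + 105 * y + y ^ 2) - (945 + 420 * y + 15 * y ^ 2)) ^ 3) + (945 + 420 * y + 15 * y ^ 2) ^ 3 * (945 + 105 * y + y ^ 2) ^ 10 - 2 * (945 + 105 * y + y ^ 2) ^ 10 * ((945 + 420 * y + 15 * y ^ 2) ^ 3 + 3/5 * ((945 + 105 * y + y ^ 2) - (945 + 420 * y + 15 * y ^ 2)) * (945 + 420 * y + 15 * y ^ 2) ^ 2 - 3/25 * ((945 + 105 * y + y ^ 2) - (945 + 420 * y + 15 * y ^ 2)) ^ 2 * (945 + 420 * y + 15 * y ^ 2) + 7/125 * ((945 + 105 * y + y ^ 2) - (945 + 420 * y + 15 * y ^ 2)) ^ 3) = y ^ 3 * ((973829509910210984627601712968750000) + (1581120412618106445874536670083984375) * y ^ 1 + (844900150588897469480278094647265625) * y ^ 2 + (128768962750065321470549270047968750) * y ^ 3 + (-16060988507204888478379326336046875) * y ^ 4 + (-1283026202794389339060715642275000) * y ^ 5 + (1393575999719289104164357256388750) * y ^ 6 + (361023861476169003221297836617375) * y ^ 7 + (46907540365081853503432487349675) * y ^ 8 + (3732982898740317479180132917155) * y ^ 9 + (185407049244301748685879803046) * y ^ 10 + (19240181384309681030112662568/5) * y ^ 11 + (-208407223943496187055500005) * y ^ 12 + (-640538052968012718313424196/25) * y ^ 13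 + (-37138218412766139247608918/25) * y ^ 14 + (-8032770569907112057070553/125) * y ^ 15 + (-296714389940302682317599/125) * y ^ 16 + (-49416488656735338799164/625) * y ^ 17 + (-1520780602313466179028/625) * y ^ 18 + (-219945872027367354267/3125) * y ^ 19 + (-1327669513083981963/625) * y ^ 20 + (-188155019270313963/3125) * y ^ 21 + (-4735474714374789/3125) * y ^ 22 + (-545020690599763/15625) * y ^ 23 + (-69501821902663/78125) * y ^ 24 + (-1856910912572/78125) * y ^ 25 + (-17793465613/78125) * y ^ 26 + (-456416212/78125) * y ^ 27 + (-14555723/78125) * y ^ 28)"
  by algebra

lemma powA:
  fixes z :: real assumes z0: "0 < z" and z1: "z \<le> 1"
  shows "z * T4a (z - 1) \<le> z powr (3/5)"
proof (rule root5_le)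
  have e: "T4a (z - 1) = 1 + 2/5*(1-z) + 7/25*(1-z)^2 + 28/125*(1-z)^3 + 119/625*(1-z)^4"
    unfolding T4a_def by algebra
  have "0 \<le> 1 - z" using z1 by simp
  then have "0 \<le> T4a (z - 1)" unfolding e
    by (intro add_nonneg_nonneg mult_nonneg_nonneg zero_le_power; simp)
  then show "0 \<le> z * T4a (z - 1)" using z0 by simp
  show "0 \<le> z" using z0 by simp
  have q: "0 \<le> (1) + (-3843246432805549/95367431640625) * z ^ 2 + (4392281637492056/19073486328125) * z ^ 3 + (-13882747318501677/19073486328125) * z ^ 4 + (30851428404521032/19073486328125) * z ^ 5 + (-52978614562533121/19073486328125) * z ^ 6 + (369023403487476496/95367431640625) * z ^ 7 + (-85801456875042678/19073486328125) * z ^ 8 + (84698045140032016/19073486328125) * z ^ 9 + (-71748280401296961/19073486328125) * z ^ 10 + (52459687020129928/19073486328125) * z ^ 11 + (-165872965838822319/95367431640625) * z ^ 12 + (18121413593756088/19073486328125) * z ^ 13 + (-8510933232868451/19073486328125) * z ^ 14 + (3408359526193776/19073486328125) * z ^ 15 + (-1148971895204518/19073486328125) * z ^ 16 + (1599657019826096/95367431640625) * z ^ 17 + (-71586933124091/19073486328125) * z ^ 18 + (12355393085112/19073486328125) * z ^ 19 + (-1541386289597/19073486328125) * z ^ 20 + (123528895336/19073486328125) * z ^ 21 + (-23863536599/95367431640625) * z ^ 22" by (rule cert_q1) (use z0 z1 in auto)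
  have "z ^ 3 - (z * T4a (z - 1)) ^ 5 = z ^ 3 * ((1) + (-3843246432805549/95367431640625) * z ^ 2 + (4392281637492056/19073486328125) * z ^ 3 + (-13882747318501677/19073486328125) * z ^ 4 + (30851428404521032/19073486328125) * z ^ 5 + (-52978614562533121/19073486328125) * z ^ 6 + (369023403487476496/95367431640625) * z ^ 7 + (-85801456875042678/19073486328125) * z ^ 8 + (84698045140032016/19073486328125) * z ^ 9 + (-71748280401296961/19073486328125) * z ^ 10 + (52459687020129928/19073486328125) * z ^ 11 + (-165872965838822319/95367431640625) * z ^ 12 + (18121413593756088/19073486328125) * z ^ 13 + (-8510933232868451/19073486328125) * z ^ 14 + (3408359526193776/19073486328125) * z ^ 15 + (-1148971895204518/19073486328125) * z ^ 16 + (1599657019826096/95367431640625) * z ^ 17 + (-71586933124091/19073486328125) * z ^ 18 + (12355393085112/19073486328125) * z ^ 19 + (-1541386289597/19073486328125) * z ^ 20 + (123528895336/19073486328125) * z ^ 21 + (-23863536599/95367431640625) * z ^ 22)"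
    unfolding T4a_def by algebra
  moreover have "0 \<le> z ^ 3 * ((1) + (-3843246432805549/95367431640625) * z ^ 2 + (4392281637492056/19073486328125) * z ^ 3 + (-13882747318501677/19073486328125) * z ^ 4 + (30851428404521032/19073486328125) * z ^ 5 + (-52978614562533121/19073486328125) * z ^ 6 + (369023403487476496/95367431640625) * z ^ 7 + (-85801456875042678/19073486328125) * z ^ 8 + (84698045140032016/19073486328125) * z ^ 9 + (-71748280401296961/19073486328125) * z ^ 10 + (52459687020129928/19073486328125) * z ^ 11 + (-165872965838822319/95367431640625) * z ^ 12 + (18121413593756088/19073486328125) * z ^ 13 + (-8510933232868451/19073486328125) * z ^ 14 + (3408359526193776/19073486328125) * z ^ 15 + (-1148971895204518/19073486328125) * z ^ 16 + (1599657019826096/95367431640625) * z ^ 17 + (-71586933124091/19073486328125) * z ^ 18 + (12355393085112/19073486328125) * z ^ 19 + (-1541386289597/19073486328125) * z ^ 20 + (123528895336/19073486328125) * z ^ 21 + (-23863536599/95367431640625) * z ^ 22)" using q z0 by simp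
  ultimately show "(z * T4a (z - 1)) ^ 5 \<le> z ^ 3" by linarith
qed

lemma powB:
  fixes z :: real assumes z0: "1/4 \<le> z" and z1: "z \<le> 1"
  shows "z powr (3/5) \<le> T3b (z - 1)" "0 < T3b (z - 1)"
proof -
  have q: "0 \<le> (17210368/30517578125) + (77446656/6103515625) * z ^ 1 + (674892288/6103515625) * z ^ 2 + (-3360920553/6103515625) * z ^ 3 + (4503167424/6103515625) * z ^ 4 + (-2225702304/30517578125) * z ^ 5 + (-4418489152/6103515625) * z ^ 6 + (5018361264/6103515625) * z ^ 7 + (-2944305504/6103515625) * z ^ 8 + (1161109712/6103515625) * z ^ 9 + (-1646090496/30517578125) * z ^ 10 + (69274296/6103515625) * z ^ 11 + (-10728452/6103515625) * z ^ 12 + (1191582/6103515625) * z ^ 13 + (-86436/6103515625) * z ^ 14 + (16807/30517578125) * z ^ 15" by (rule cert_q2) (use z0 z1 in auto)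
  have "T3b (z - 1) ^ 5 - z ^ 3 = (17210368/30517578125) + (77446656/6103515625) * z ^ 1 + (674892288/6103515625) * z ^ 2 + (-3360920553/6103515625) * z ^ 3 + (4503167424/6103515625) * z ^ 4 + (-2225702304/30517578125) * z ^ 5 + (-4418489152/6103515625) * z ^ 6 + (5018361264/6103515625) * z ^ 7 + (-2944305504/6103515625) * z ^ 8 + (1161109712/6103515625) * z ^ 9 + (-1646090496/30517578125) * z ^ 10 + (69274296/6103515625) * z ^ 11 + (-10728452/6103515625) * z ^ 12 + (1191582/6103515625) * z ^ 13 + (-86436/6103515625) * z ^ 14 + (16807/30517578125) * z ^ 15"
    unfolding T3b_def by algebra
  then have le: "z ^ 3 \<le> T3b (z - 1) ^ 5" using q by linarith
  moreover have "0 < z ^ 3" using z0 by simp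
  ultimately have "0 < T3b (z - 1) ^ 5" by linarith
  then show pos: "0 < T3b (z - 1)" by (simp add: zero_less_power_eq)
  show "z powr (3/5) \<le> T3b (z - 1)"
    by (rule root5_ge) (use le pos z0 in auto)
qed

lemma na_pos:
  fixes y :: real assumes "0 \<le> y" "y \<le> 256/25"
  shows "0 < (945 + 420 * y + 15 * y ^ 2) ^ 2 - y * (945 + 105 * y + y ^ 2) ^ 2"
proof -
  have "(1) \<le> (893025) + (-99225) * y ^ 1 + (6300) * y ^ 2 + (-315) * y ^ 3 + (15) * y ^ 4 + (-1) * y ^ 5" by (rule cert_na) (use assms in auto)
  moreover have "(945 + 420 * y + 15 * y ^ 2) ^ 2 - y * (945 + 105 * y + y ^ 2) ^ 2 = (893025) + (-99225) * y ^ 1 + (6300) * y ^ 2 + (-315) * y ^ 3 + (15) * y ^ 4 + (-1) * y ^ 5"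
    by algebra
  ultimately show ?thesis by linarith
qed

lemma na_le:
  fixes y :: real assumes "0 \<le> y" "y \<le> 256/25"
  shows "(945 + 420 * y + 15 * y ^ 2) ^ 2 - y * (945 + 105 * y + y ^ 2) ^ 2 \<le> (945 + 105 * y + y ^ 2) ^ 2"
proof -
  have "0 \<le> (297675) * y ^ 1 + (6615) * y ^ 2 + (525) * y ^ 3 + (-14) * y ^ 4 + (1) * y ^ 5" by (rule cert_c4) (use assms in auto)
  moreover have "(945 + 105 * y + y ^ 2) ^ 2 - ((945 + 420 * y + 15 * y ^ 2) ^ 2 - y * (945 + 105 * y + y ^ 2) ^ 2) = (297675) * y ^ 1 + (6615) * y ^ 2 + (525) * y ^ 3 + (-14) * y ^ 4 + (1) * y ^ 5"
    by algebra
  ultimately show ?thesis by linarith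
qed

lemma powB':
  fixes b :: real assumes b1: "1 \<le> b" and b4: "b \<le> 4"
  shows "1 / T3b (1 / b - 1) \<le> b powr (3/5)"
proof -
  have z0: "1/4 \<le> 1/b" using b4 b1 by (simp add: field_simps)
  have z1: "1/b \<le> 1" using b1 by simp
  have le: "(1/b) powr (3/5) \<le> T3b (1/b - 1)" and pos: "0 < T3b (1/b - 1)"
    using powB[OF z0 z1] by auto
  have bp: "0 < b powr (3/5)" using b1 by simp
  have "(1/b) powr (3/5) = 1 / b powr (3/5)" by (simp add: powr_divide)
  with le have "1 / b powr (3/5) \<le> T3b (1/b - 1)" by simp
  then show ?thesis using bp pos by (simp add: field_simps)
qed

lemma final_ineq:
  fixes y :: real assumes y0: "0 < y" and y1: "y \<le> 256/25"
  defines "N \<equiv> 945 + 420 * y + 15 * y ^ 2" and "D \<equiv> 945 + 105 * y + y ^ 2"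
  defines "b \<equiv> N / D"
  defines "a \<equiv> b ^ 2 - y"
  shows "2 < a * T4a (a - 1) + 1 / T3b (1 / b - 1)"
proof -
  have Np: "0 < N" using y0 unfolding N_def by (intro add_pos_nonneg) auto
  have Dp: "0 < D" using y0 unfolding D_def by (intro add_pos_nonneg) auto
  have aD: "a * D ^ 2 = N ^ 2 - y * D ^ 2"
    using Dp unfolding a_def b_def by (simp add: field_simps)
  have eA: "a * T4a (a - 1) * D ^ 10 = (a * D ^ 2) * ((D ^ 2) ^ 4 - 2/5 * (a * D ^ 2 - D ^ 2) * (D ^ 2) ^ 3
      + 7/25 * (a * D ^ 2 - D ^ 2) ^ 2 * (D ^ 2) ^ 2 - 28/125 * (a * D ^ 2 - D ^ 2) ^ 3 * (D ^ 2)
      + 119/625 * (a * D ^ 2 - D ^ 2) ^ 4)"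
    unfolding T4a_def by algebra
  define SA where "SA = (N ^ 2 - y * (D ^ 2)) * ((D ^ 2) ^ 4 - 2/5 * ((N ^ 2 - y * (D ^ 2)) - (D ^ 2)) * (D ^ 2) ^ 3
      + 7/25 * ((N ^ 2 - y * (D ^ 2)) - (D ^ 2)) ^ 2 * (D ^ 2) ^ 2 - 28/125 * ((N ^ 2 - y * (D ^ 2)) - (D ^ 2)) ^ 3 * (D ^ 2)
      + 119/625 * ((N ^ 2 - y * (D ^ 2)) - (D ^ 2)) ^ 4)"
  have eA2: "a * T4a (a - 1) = SA / D ^ 10"
    using eA Dp unfolding SA_def aD by (simp add: field_simps)
  define e where "e = 1 / b - 1"
  have eN: "e * N = D - N" using Np Dp unfolding e_def b_def by (simp add: field_simps)
  have eB: "T3b e * N ^ 3 = N ^ 3 + 3/5 * (e * N) * N ^ 2 - 3/25 * (e * N) ^ 2 * N + 7/125 * (e * N) ^ 3"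
    unfolding T3b_def by algebra
  define MB where "MB = N ^ 3 + 3/5 * (D - N) * N ^ 2 - 3/25 * (D - N) ^ 2 * N + 7/125 * (D - N) ^ 3"
  have MBp: "0 < MB" unfolding MB_def N_def D_def by (rule MB_pos) (use y0 in simp)
  have eB2: "T3b e * N ^ 3 = MB" using eB unfolding eN MB_def .
  have Tp: "T3b e = MB / N ^ 3" using eB2 Np by (simp add: field_simps)
  have eB3: "1 / T3b (1 / b - 1) = N ^ 3 / MB"
    using Tp MBp Np unfolding e_def[symmetric] by simp
  have PI: "SA * MB + N ^ 3 * D ^ 10 - 2 * D ^ 10 * MB = y ^ 3 * ((973829509910210984627601712968750000) + (1581120412618106445874536670083984375) * y ^ 1 + (844900150588897469480278094647265625) * y ^ 2 + (128768962750065321470549270047968750) * y ^ 3 + (-16060988507204888478379326336046875) * y ^ 4 + (-1283026202794389339060715642275000) * y ^ 5 + (1393575999719289104164357256388750) * y ^ 6 + (361023861476169003221297836617375) * y ^ 7 + (46907540365081853503432487349675) * y ^ 8 + (3732982898740317479180132917155) * y ^ 9 + (185407049244301748685879803046) * y ^ 10 + (19240181384309681030112662568/5) * y ^ 11 + (-208407223943496187055500005) * y ^ 12 + (-640538052968012718313424196/25) * y ^ 13 + (-37138218412766139247608918/25) * y ^ 14 + (-8032770569907112057070553/125) * y ^ 15 + (-296714389940302682317599/125) * y ^ 16 + (-49416488656735338799164/625) * y ^ 17 + (-1520780602313466179028/625) * y ^ 18 + (-219945872027367354267/3125) * y ^ 19 + (-1327669513083981963/625) * y ^ 20 + (-188155019270313963/3125)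 * y ^ 21 + (-4735474714374789/3125) * y ^ 22 + (-545020690599763/15625) * y ^ 23 + (-69501821902663/78125) * y ^ 24 + (-1856910912572/78125) * y ^ 25 + (-17793465613/78125) * y ^ 26 + (-456416212/78125) * y ^ 27 + (-14555723/78125) * y ^ 28)"
    unfolding SA_def MB_def N_def D_def by (rule P_ident)
  have P1: "1 \<le> (973829509910210984627601712968750000) + (1581120412618106445874536670083984375) * y ^ 1 + (844900150588897469480278094647265625) * y ^ 2 + (128768962750065321470549270047968750) * y ^ 3 + (-16060988507204888478379326336046875) * y ^ 4 + (-1283026202794389339060715642275000) * y ^ 5 + (1393575999719289104164357256388750) * y ^ 6 + (361023861476169003221297836617375) * y ^ 7 + (46907540365081853503432487349675) * y ^ 8 + (3732982898740317479180132917155) * y ^ 9 + (185407049244301748685879803046) * y ^ 10 + (19240181384309681030112662568/5) * y ^ 11 + (-208407223943496187055500005) * y ^ 12 + (-640538052968012718313424196/25) * y ^ 13 + (-37138218412766139247608918/25) * y ^ 14 + (-8032770569907112057070553/125) * y ^ 15 + (-296714389940302682317599/125) * y ^ 16 + (-49416488656735338799164/625) * y ^ 17 + (-1520780602313466179028/625) * y ^ 18 + (-219945872027367354267/3125) * y ^ 19 + (-1327669513083981963/625) * y ^ 20 + (-188155019270313963/3125) * y ^ 21 + (-4735474714374789/3125) * y ^ 22 + (-545020690599763/15625) * y ^ 23 + (-69501821902663/78125) * y ^ 24 + (-1856910912572/78125) * y ^ 25 + (-17793465613/78125) * y ^ 26 + (-456416212/78125) * y ^ 27 + (-14555723/78125)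 * y ^ 28" by (rule cert_P1) (use y0 y1 in auto)
  have "0 < y ^ 3 * ((973829509910210984627601712968750000) + (1581120412618106445874536670083984375) * y ^ 1 + (844900150588897469480278094647265625) * y ^ 2 + (128768962750065321470549270047968750) * y ^ 3 + (-16060988507204888478379326336046875) * y ^ 4 + (-1283026202794389339060715642275000) * y ^ 5 + (1393575999719289104164357256388750) * y ^ 6 + (361023861476169003221297836617375) * y ^ 7 + (46907540365081853503432487349675) * y ^ 8 + (3732982898740317479180132917155) * y ^ 9 + (185407049244301748685879803046) * y ^ 10 + (19240181384309681030112662568/5) * y ^ 11 + (-208407223943496187055500005) * y ^ 12 + (-640538052968012718313424196/25) * y ^ 13 + (-37138218412766139247608918/25) * y ^ 14 + (-8032770569907112057070553/125) * y ^ 15 + (-296714389940302682317599/125) * y ^ 16 + (-49416488656735338799164/625) * y ^ 17 + (-1520780602313466179028/625) * y ^ 18 + (-219945872027367354267/3125) * y ^ 19 + (-1327669513083981963/625) * y ^ 20 + (-188155019270313963/3125) * y ^ 21 + (-4735474714374789/3125) * y ^ 22 + (-545020690599763/15625) * y ^ 23 + (-69501821902663/78125) * y ^ 24 + (-1856910912572/78125) * y ^ 25 + (-17793465613/78125) * y ^ 26 + (-456416212/78125) * y ^ 27 + (-14555723/78125) * y ^ 28)" using y0 P1 by simp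
  then have key: "2 * D ^ 10 * MB < SA * MB + N ^ 3 * D ^ 10" using PI by linarith
  have "2 < SA / D ^ 10 + N ^ 3 / MB"
    using key Dp MBp by (simp add: field_simps)
  then show ?thesis using eA2 eB3 by simp
qed

lemma vbound:
  fixes x :: real assumes x0: "0 < x"
  shows "(945 + 420 * x^2 + 15 * (x^2) ^ 2) / (945 + 105 * x^2 + (x^2) ^ 2) \<le> x * cosh x / sinh x"
proof -
  have h: "0 \<le> ((945) * x ^ 1 + (105) * x ^ 3 + (1) * x ^ 5) * cosh x + ((-945) + (-420) * x ^ 2 + (-15) * x ^ 4) * sinh x"
    using cs_lev0[of x] x0 by simp
  have "x * cosh x * (945 + 105 * x^2 + (x^2) ^ 2) - (945 + 420 * x^2 + 15 * (x^2) ^ 2) * sinh x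
     = ((945) * x ^ 1 + (105) * x ^ 3 + (1) * x ^ 5) * cosh x + ((-945) + (-420) * x ^ 2 + (-15) * x ^ 4) * sinh x"
    by algebra
  then have h2: "(945 + 420 * x^2 + 15 * (x^2) ^ 2) * sinh x \<le> x * cosh x * (945 + 105 * x^2 + (x^2) ^ 2)"
    using h by linarith
  have Dp: "0 < 945 + 105 * x^2 + (x^2) ^ 2" by (intro add_pos_nonneg) auto
  have sp: "0 < sinh x" using x0 by simp
  show ?thesis using h2 Dp sp by (simp add: field_simps)
qed

lemma sq_ident:
  fixes x :: real assumes x0: "0 < x"
  shows "(x * cosh x / sinh x) ^ 2 - x ^ 2 = (x / sinh x) ^ 2"
proof -
  have sp: "sinh x \<noteq> 0" using x0 by simp
  have c: "cosh x ^ 2 = sinh x ^ 2 + 1" by (rule cosh_square_eq)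
  have "(x * cosh x / sinh x) ^ 2 - x ^ 2 = x ^ 2 * (cosh x ^ 2 - sinh x ^ 2) / sinh x ^ 2"
    using sp by (simp add: field_simps power_mult_distrib)
  also have "\<dots> = (x / sinh x) ^ 2" using c by (simp add: power_divide)
  finally show ?thesis .
qed

lemma main35:
  fixes x :: real assumes x0: "0 < x"
  shows "2 < (x / sinh x) powr (2 * (3/5)) + (x / tanh x) powr (3/5)"
proof -
  have sp: "0 < sinh x" using x0 by simp
  have cp: "0 < cosh x" by simp
  define v where "v = x * cosh x / sinh x"
  have tv: "x / tanh x = v" unfolding v_def tanh_def by simp
  have vx: "x < v"
  proof -
    have "sinh x < cosh x" by (rule sinh_less_cosh_real)
    then have "x * sinh x < x * cosh x" using x0 by simp
    then show ?thesis unfolding v_def using sp by (simp add: field_simps)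
  qed
  have xs: "0 < x / sinh x" using x0 sp by simp
  have w: "(x / sinh x) powr (2 * (3/5)) = (v ^ 2 - x ^ 2) powr (3/5)"
  proof -
    have "(x / sinh x) powr (2 * (3/5)) = ((x / sinh x) powr 2) powr (3/5)" by (simp add: powr_powr)
    also have "\<dots> = ((x / sinh x) ^ 2) powr (3/5)" using xs by (simp add: powr_numeral)
    also have "(x / sinh x) ^ 2 = v ^ 2 - x ^ 2" unfolding v_def using sq_ident[OF x0] by simp
    finally show ?thesis .
  qed
  show ?thesis
  proof (cases "16/5 \<le> x")
    case True
    have "(16/5) ^ 3 \<le> x ^ 3" using True by (intro power_mono) auto
    moreover have "x ^ 3 < v ^ 3" using vx x0 by (intro power_strict_mono) auto
    moreover have "(2::real) ^ 5 < (16/5) ^ 3" by (simp add: power3_eq_cube)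
    ultimately have "(2::real) ^ 5 < v ^ 3" by linarith
    then have "2 < v powr (3/5)" by (intro root5_less) (use vx x0 in auto)
    moreover have "0 \<le> (x / sinh x) powr (2 * (3/5))" by simp
    ultimately show ?thesis unfolding tv by linarith
  next
    case False
    define y where "y = x ^ 2"
    have y0: "0 < y" unfolding y_def using x0 by simp
    have y1: "y \<le> 256/25"
    proof -
      have "x ^ 2 \<le> (16/5) ^ 2" using False x0 by (intro power_mono) auto
      moreover have "(16/5::real) ^ 2 = 256/25" by (simp add: power2_eq_square)
      ultimately show ?thesis unfolding y_def by linarith
    qed
    define b where "b = (945 + 420 * y + 15 * y ^ 2) / (945 + 105 * y + y ^ 2)"
    define a where "a = b ^ 2 - y"
    have Dp: "0 < 945 + 105 * y + y ^ 2" using y0 by (intro add_pos_nonneg) auto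
    have bv: "b \<le> v" unfolding b_def y_def v_def using vbound[OF x0] by simp
    have b1: "1 \<le> b" unfolding b_def using Dp y0 by (simp add: field_simps)
    have b4: "b \<le> 4"
    proof -
      have "y * y \<le> 256/25 * (256/25)" using y0 y1 by (intro mult_mono) auto
      then have "y ^ 2 \<le> 65536/625" by (simp add: power2_eq_square)
      then have "945 + 420 * y + 15 * y ^ 2 \<le> 4 * (945 + 105 * y + y ^ 2)" by (simp add: algebra_simps)
      then show ?thesis unfolding b_def using Dp by (simp add: divide_le_eq)
    qed
    have aD: "a * (945 + 105 * y + y ^ 2) ^ 2 = (945 + 420 * y + 15 * y ^ 2) ^ 2 - y * (945 + 105 * y + y ^ 2) ^ 2"
      using Dp unfolding a_def b_def by (simp add: field_simps)
    have apos: "0 < a"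
    proof -
      have "0 < a * (945 + 105 * y + y ^ 2) ^ 2" using aD na_pos[of y] y0 y1 by simp
      then show ?thesis using Dp by (simp add: zero_less_mult_iff)
    qed
    have a1: "a \<le> 1"
    proof -
      have "a * (945 + 105 * y + y ^ 2) ^ 2 \<le> 1 * (945 + 105 * y + y ^ 2) ^ 2"
        using aD na_le[of y] y0 y1 by simp
      then show ?thesis using Dp by (simp add: mult_le_cancel_right)
    qed
    have aw: "a \<le> v ^ 2 - x ^ 2"
    proof -
      have "b ^ 2 \<le> v ^ 2" using bv b1 by (intro power_mono) auto
      then show ?thesis unfolding a_def y_def by simp
    qed
    have t1: "a * T4a (a - 1) \<le> (v ^ 2 - x ^ 2) powr (3/5)"
    proof -
      have "a * T4a (a - 1) \<le> a powr (3/5)" by (rule powA[OF apos a1])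
      also have "\<dots> \<le> (v ^ 2 - x ^ 2) powr (3/5)" by (rule powr_mono2) (use apos aw in auto)
      finally show ?thesis .
    qed
    have t2: "1 / T3b (1 / b - 1) \<le> v powr (3/5)"
    proof -
      have "1 / T3b (1 / b - 1) \<le> b powr (3/5)" by (rule powB'[OF b1 b4])
      also have "\<dots> \<le> v powr (3/5)" by (rule powr_mono2) (use b1 bv in auto)
      finally show ?thesis .
    qed
    have "2 < a * T4a (a - 1) + 1 / T3b (1 / b - 1)"
      unfolding a_def b_def by (rule final_ineq[OF y0 y1])
    then show ?thesis using t1 t2 unfolding w tv by linarith
  qed
qed

lemma main_p:
  fixes x p :: real assumes x0: "0 < x" and p: "3/5 \<le> p"
  shows "2 < (x / sinh x) powr (2 * p) + (x / tanh x) powr p"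
proof -
  have sp: "0 < sinh x" using x0 by simp
  have tp: "0 < tanh x" using x0 by (simp add: tanh_def)
  define l where "l = (3/5) / p"
  have p0: "0 < p" using p by simp
  have l0: "0 \<le> l" "l \<le> 1" unfolding l_def using p p0 by (auto simp: field_simps)
  define u1 where "u1 = (x / sinh x) powr (2 * p)"
  define u2 where "u2 = (x / tanh x) powr p"
  have u1p: "0 < u1" unfolding u1_def using x0 sp by simp
  have u2p: "0 < u2" unfolding u2_def using x0 tp by simp
  have e1: "(x / sinh x) powr (2 * (3/5)) = u1 powr l"
    unfolding u1_def l_def using p0 by (simp add: powr_powr)
  have e2: "(x / tanh x) powr (3/5) = u2 powr l"
    unfolding u2_def l_def using p0 by (simp add: powr_powr)
  have y1: "u1 powr l \<le> l * u1 + (1 - l)"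
    using Youngs_inequality_0[of l "1 - l" u1 1] l0 u1p by simp
  have y2: "u2 powr l \<le> l * u2 + (1 - l)"
    using Youngs_inequality_0[of l "1 - l" u2 1] l0 u2p by simp
  have "2 < u1 powr l + u2 powr l" using main35[OF x0] unfolding e1 e2 .
  then have "2 * l < l * (u1 + u2)" using y1 y2 by (simp add: algebra_simps)
  moreover have "0 < l" unfolding l_def using p0 by simp
  ultimately have "2 < u1 + u2" by (simp add: mult.commute)
  then show ?thesis unfolding u1_def u2_def .
qed

lemma pos_from_deriv_lim:
  fixes f f' :: "real \<Rightarrow> real"
  assumes lim: "(f \<longlongrightarrow> 0) (at_right 0)" and d: "\<And>x. 0 < x \<Longrightarrow> (f has_real_derivative f' x) (at x)"
    and p: "\<And>x. 0 < x \<Longrightarrow> 0 < f' x" and x: "0 < x"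
  shows "0 < f x"
proof -
  have mono: "f s < f t" if st: "0 < s" "s < t" for s t
  proof (rule DERIV_pos_imp_increasing[OF st(2)])
    fix u assume "s \<le> u" "u \<le> t"
    then have "0 < u" using st by linarith
    then show "\<exists>y. DERIV f u :> y \<and> y > 0" using d[of u] p[of u] by (intro exI[of _ "f' u"]) auto
  qed
  have ev: "eventually (\<lambda>s. f s \<le> f (x/2)) (at_right 0)"
    by (rule eventually_at_rightI[of 0 "x/2"]) (use mono x in \<open>auto intro: less_imp_le\<close>)
  have "0 \<le> f (x/2)" by (rule tendsto_upperbound[OF lim ev]) simp
  then show ?thesis using mono[of "x/2" x] x by linarith
qed

lemma m_pos: "0 < x \<Longrightarrow> 0 < x * cosh x - sinh (x::real)"
proof (rule pos_from_deriv_lim[where f="\<lambda>x. x * cosh x - sinh x" and f'="\<lambda>x. x * sinh x"])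
  show "((\<lambda>x::real. x * cosh x - sinh x) \<longlongrightarrow> 0) (at_right 0)"
    by (rule tendsto_eq_intros refl | simp)+
  fix x :: real assume "0 < x"
  show "((\<lambda>x. x * cosh x - sinh x) has_real_derivative x * sinh x) (at x)"
    by (rule derivative_eq_intros refl | simp)+
  show "0 < x * sinh x" using \<open>0 < x\<close> by simp
qed

lemma k_pos: "0 < x \<Longrightarrow> 0 < x * (2 * cosh x ^ 2 + 1) - 3 * sinh x * cosh (x::real)"
proof (rule pos_from_deriv_lim[where f="\<lambda>x. x * (2 * cosh x ^ 2 + 1) - 3 * sinh x * cosh x"
      and f'="\<lambda>x. 4 * sinh x * (x * cosh x - sinh x)"])
  show "((\<lambda>x::real. x * (2 * cosh x ^ 2 + 1) - 3 * sinh x * cosh x) \<longlongrightarrow> 0) (at_right 0)"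
    by (rule tendsto_eq_intros refl | simp)+
  fix x :: real assume x0: "0 < x"
  have c: "cosh x ^ 2 = sinh x ^ 2 + 1" by (rule cosh_square_eq)
  show "((\<lambda>x. x * (2 * cosh x ^ 2 + 1) - 3 * sinh x * cosh x) has_real_derivative
        4 * sinh x * (x * cosh x - sinh x)) (at x)"
    apply (rule derivative_eq_intros refl)+
    using c by (simp add: algebra_simps power2_eq_square)
  show "0 < 4 * sinh x * (x * cosh x - sinh x)" using x0 m_pos[OF x0] by simp
qed

lemma sinh_cube:
  fixes x :: real assumes x0: "0 < x"
  shows "cosh x < (sinh x / x) ^ 3"
proof -
  define F where "F = (\<lambda>x::real. 3 * ln (sinh x) - 3 * ln x - ln (cosh x))"
  have lim: "(F \<longlongrightarrow> 0) (at_right 0)" unfolding F_def by real_asymp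
  have "0 < F x"
  proof (rule pos_from_deriv_lim[OF lim _ _ x0,
        where f'="\<lambda>t. 3 * (1 / sinh t * cosh t) - 3 * (1 / t) - 1 / cosh t * sinh t"])
    fix t :: real assume t0: "0 < t"
    have st: "0 < sinh t" using t0 by simp
    have d1: "((\<lambda>x. ln (sinh x)) has_real_derivative 1 / sinh t * cosh t) (at t)"
      using DERIV_chain2[OF DERIV_ln_divide[OF st] has_field_derivative_sinh[OF DERIV_ident]] by simp
    have d3: "((\<lambda>x. ln (cosh x)) has_real_derivative 1 / cosh t * sinh t) (at t)"
      using DERIV_chain2[OF DERIV_ln_divide[OF cosh_real_pos] has_field_derivative_cosh[OF DERIV_ident]] by simp
    show "(F has_real_derivative 3 * (1 / sinh t * cosh t) - 3 * (1 / t) - 1 / cosh t * sinh t) (at t)"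
      unfolding F_def by (intro DERIV_diff DERIV_cmult d1 d3 DERIV_ln_divide[OF t0])
    have c: "cosh t ^ 2 = sinh t ^ 2 + 1" by (rule cosh_square_eq)
    have "3 * (1 / sinh t * cosh t) - 3 * (1 / t) - 1 / cosh t * sinh t
        = (t * (2 * cosh t ^ 2 + 1) - 3 * sinh t * cosh t) / (t * sinh t * cosh t)"
      using st t0 by (simp add: field_simps) (use c in algebra)
    moreover have "0 < (t * (2 * cosh t ^ 2 + 1) - 3 * sinh t * cosh t) / (t * sinh t * cosh t)"
      using k_pos[OF t0] t0 st by simp
    ultimately show "0 < 3 * (1 / sinh t * cosh t) - 3 * (1 / t) - 1 / cosh t * sinh t" by simp
  qed
  then have "ln (cosh x) < 3 * ln (sinh x / x)" unfolding F_def using x0 by (simp add: ln_div)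
  also have "3 * ln (sinh x / x) = ln ((sinh x / x) ^ 3)" using x0 by (simp add: ln_realpow)
  finally show ?thesis using x0 by simp
qed

lemma prod_base:
  fixes x p :: real assumes x0: "0 < x"
  shows "(sinh x / x) powr (2 * p) * (tanh x / x) powr p = (sinh x ^ 3 / (x ^ 3 * cosh x)) powr p"
proof -
  have sp: "0 < sinh x" using x0 by simp
  have tp: "0 < tanh x" using x0 by (simp add: tanh_def)
  have "(sinh x / x) powr (2 * p) = ((sinh x / x) ^ 2) powr p"
    using sp x0 by (simp add: powr_powr[symmetric] powr_numeral)
  moreover have "((sinh x / x) ^ 2 * (tanh x / x)) powr p = ((sinh x / x) ^ 2) powr p * (tanh x / x) powr p"
    by (rule powr_mult)
  ultimately have "(sinh x / x) powr (2 * p) * (tanh x / x) powr p = ((sinh x / x) ^ 2 * (tanh x / x)) powr p"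
    by simp
  also have "(sinh x / x) ^ 2 * (tanh x / x) = sinh x ^ 3 / (x ^ 3 * cosh x)"
    by (simp add: tanh_def power2_eq_square power3_eq_cube field_simps)
  finally show ?thesis .
qed

lemma base_gt1:
  fixes x :: real assumes x0: "0 < x"
  shows "1 < sinh x ^ 3 / (x ^ 3 * cosh x)"
proof -
  have "cosh x < (sinh x / x) ^ 3" by (rule sinh_cube[OF x0])
  then have "cosh x * x ^ 3 < sinh x ^ 3" using x0 by (simp add: power_divide field_simps)
  then show ?thesis using x0 by (simp add: field_simps)
qed

lemma first_iff:
  fixes x p :: real assumes x0: "0 < x"
  defines "X \<equiv> (sinh x / x) powr (2 * p)" and "Y \<equiv> (tanh x / x) powr p"
  shows "(x / sinh x) powr (2 * p) = 1 / X" "(x / tanh x) powr p = 1 / Y" "0 < X" "0 < Y"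
    "X * Y = (sinh x ^ 3 / (x ^ 3 * cosh x)) powr p"
proof -
  have sp: "0 < sinh x" using x0 by simp
  have tp: "0 < tanh x" using x0 by (simp add: tanh_def)
  show "(x / sinh x) powr (2 * p) = 1 / X" unfolding X_def using sp x0 by (simp add: powr_divide)
  show "(x / tanh x) powr p = 1 / Y" unfolding Y_def using tp x0 by (simp add: powr_divide)
  show "0 < X" unfolding X_def using sp x0 by simp
  show "0 < Y" unfolding Y_def using tp x0 by simp
  show "X * Y = (sinh x ^ 3 / (x ^ 3 * cosh x)) powr p" unfolding X_def Y_def by (rule prod_base[OF x0])
qed

lemma first_ineq:
  fixes x p :: real assumes x0: "0 < x" and p0: "0 < p"
  shows "(x / sinh x) powr (2 * p) + (x / tanh x) powr p < (sinh x / x) powr (2 * p) + (tanh x / x) powr p"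
proof -
  define X where "X = (sinh x / x) powr (2 * p)"
  define Y where "Y = (tanh x / x) powr p"
  note f = first_iff[OF x0, of p, folded X_def Y_def]
  have "1 powr p < (sinh x ^ 3 / (x ^ 3 * cosh x)) powr p"
    by (rule powr_less_mono2[OF p0]) (use base_gt1[OF x0] in auto)
  then have XY: "1 < X * Y" using f by simp
  have "1 / X + 1 / Y = (X + Y) / (X * Y)" using f(3,4) by (simp add: field_simps)
  also have "\<dots> < X + Y"
  proof -
    have "(X + Y) * 1 < (X + Y) * (X * Y)" using XY f(3,4) by (intro mult_strict_left_mono) auto
    then show ?thesis using f(3,4) by (simp add: divide_less_eq)
  qed
  finally show ?thesis unfolding f(1,2) X_def Y_def .
qed

lemma first_fail:
  fixes x p :: real assumes x0: "0 < x" and p0: "p < 0"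
  shows "\<not> ((x / sinh x) powr (2 * p) + (x / tanh x) powr p < (sinh x / x) powr (2 * p) + (tanh x / x) powr p)"
proof -
  define X where "X = (sinh x / x) powr (2 * p)"
  define Y where "Y = (tanh x / x) powr p"
  note f = first_iff[OF x0, of p, folded X_def Y_def]
  define B where "B = sinh x ^ 3 / (x ^ 3 * cosh x)"
  have B1: "1 < B" unfolding B_def by (rule base_gt1[OF x0])
  have "1 powr (- p) < B powr (- p)"
    by (rule powr_less_mono2) (use p0 B1 in auto)
  then have "1 < 1 / B powr p" using B1 by (simp add: powr_minus_divide)
  then have XY: "X * Y < 1" using f B1 unfolding B_def[symmetric] by (simp add: field_simps)
  have "X + Y < (X + Y) / (X * Y)"
  proof -
    have "(X + Y) * (X * Y) < (X + Y) * 1" using XY f(3,4) by (intro mult_strict_left_mono) auto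
    moreover have "0 < X * Y" using f(3,4) by simp
    ultimately show ?thesis by (simp add: less_divide_eq)
  qed
  also have "(X + Y) / (X * Y) = 1 / X + 1 / Y" using f(3,4) by (simp add: field_simps)
  finally show ?thesis unfolding f(1,2) X_def Y_def by simp
qed

lemma small_p_fail:
  fixes p :: real assumes p0: "0 < p" and p1: "p < 3/5"
  shows "\<exists>x>0. \<not> (2 < (x / sinh x) powr (2 * p) + (x / tanh x) powr p)"
proof -
  have lim: "((\<lambda>x::real. ((x/sinh x) powr (2*p) + (x / tanh x) powr p - 2) / x^4) \<longlongrightarrow>
      p / 60 + ((2 * p - 1) * p / 36 + (p - 1) * p / 18)) (at_right 0)"
    using p0 p1 by real_asymp
  have neg: "p / 60 + ((2 * p - 1) * p / 36 + (p - 1) * p / 18) < 0"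
  proof -
    have "p / 60 + ((2 * p - 1) * p / 36 + (p - 1) * p / 18) = p * (5 * p - 3) / 45"
      by (simp add: field_simps)
    moreover have "p * (5 * p - 3) < 0" using p0 p1 by (simp add: mult_pos_neg)
    ultimately show ?thesis by linarith
  qed
  have "eventually (\<lambda>x. ((x/sinh x) powr (2*p) + (x / tanh x) powr p - 2) / x^4 < 0) (at_right 0)"
    by (rule order_tendstoD(2)[OF lim neg])
  then obtain b where b: "0 < b" and hb: "\<And>y. 0 < y \<Longrightarrow> y < b \<Longrightarrow>
      ((y/sinh y) powr (2*p) + (y / tanh y) powr p - 2) / y^4 < 0"
    unfolding eventually_at_right_field by auto
  have "((b/2/sinh (b/2)) powr (2*p) + (b/2 / tanh (b/2)) powr p - 2) / (b/2)^4 < 0"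
    using hb[of "b/2"] b by simp
  moreover have "0 < (b/2) ^ 4" using b by simp
  ultimately have "(b/2/sinh (b/2)) powr (2*p) + (b/2 / tanh (b/2)) powr p - 2 < 0"
    by (simp add: divide_less_0_iff)
  then show ?thesis using b by (intro exI[of _ "b/2"]) auto
qed

theorem corollary4p11:
  fixes p :: real
  shows "(\<forall>x::real. x > 0 \<longrightarrow>
            (sinh x / x) powr (2 * p) + (tanh x / x) powr p
              > (x / sinh x) powr (2 * p) + (x / tanh x) powr p
          \<and> (x / sinh x) powr (2 * p) + (x / tanh x) powr p > 2)
         \<longleftrightarrow> p \<ge> 3 / 5"
proof
  assume H: "\<forall>x::real. x > 0 \<longrightarrow>
            (sinh x / x) powr (2 * p) + (tanh x / x) powr p
              > (x / sinh x) powr (2 * p) + (x / tanh x) powr p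
          \<and> (x / sinh x) powr (2 * p) + (x / tanh x) powr p > 2"
  show "3/5 \<le> p"
  proof (rule ccontr)
    assume "\<not> 3/5 \<le> p"
    then have p1: "p < 3/5" by simp
    consider "p < 0" | "p = 0" | "0 < p" by linarith
    then show False
    proof cases
      case 1
      have h1: "(1 / sinh 1) powr (2 * p) + (1 / tanh 1) powr p < (sinh 1 / 1) powr (2 * p) + (tanh 1 / 1) powr p"
        by (rule conjunct1[OF H[rule_format]]) simp
      then show ?thesis using first_fail[OF zero_less_one 1] by blast
    next
      case 2
      have s1: "sinh (1::real) \<noteq> 0" by simp
      have t1: "tanh (1::real) \<noteq> 0" by (simp add: tanh_def)
      have "2 < (1 / sinh (1::real)) powr (2 * p) + (1 / tanh 1) powr p" using H by auto
      then show ?thesis using 2 s1 t1 by simp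
    next
      case 3
      then obtain x where "0 < x" "\<not> (2 < (x / sinh x) powr (2 * p) + (x / tanh x) powr p)"
        using small_p_fail[OF _ p1] by blast
      then show ?thesis using H by auto
    qed
  qed
next
  assume p: "3/5 \<le> p"
  then have p0: "0 < p" by simp
  show "\<forall>x::real. x > 0 \<longrightarrow>
            (sinh x / x) powr (2 * p) + (tanh x / x) powr p
              > (x / sinh x) powr (2 * p) + (x / tanh x) powr p
          \<and> (x / sinh x) powr (2 * p) + (x / tanh x) powr p > 2"
    using first_ineq[OF _ p0] main_p[OF _ p] by auto
qed

end
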